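(* Let $k$ be a field and let $X$ be a locally weakly quasi-compact topological space which has a countable covering $\{U_n\}_{n\in\mathbb{N}}$ by open sets with $U_n\subset\subset X$ for every $n$. Then the family of c-soft sheaves in $\mathrm{Mod}(k_X)$ is injective with respect to the functor $\Gamma(X;\bullet)$; that is: every sheaf admits a monomorphism into a c-soft sheaf; if $0\to F'\to F\to F''\to0$ is exact in $\mathrm{Mod}(k_X)$ with $F',F$ c-soft then $F''$ is c-soft; and if $0\to F'\to F\to F''\to0$ is exact with $F'$ c-soft then $0\to\Gamma(X;F')\to\Gamma(X;F)\to\Gamma(X;F'')\to0$ is exact.
   Context: For open subsets $V\subseteq U$ of a topological space $X$, write $V\subset\subset U$ (equivalently $U\supset\supset V$) if for every covering $\{U_i\}_{i\in I}$ of $U$ by open sets there is a finite $J\subseteq I$ with $V\subseteq\bigcup_{i\in J}U_i$; $\mathrm{Op}^c(U)$ is the set of such $V$. $X$ is locally weakly quasi-compact if for all open $U,V$: (LWC1) every $x\in U$ has a fundamental system of neighborhoods in $\mathrm{Op}^c(U)$; (LWC2) for $U'\in\mathrm{Op}^c(U)$, $V'\in\mathrm{Op}^c(V)$ one has $U'\cap V'\in\mathrm{Op}^c(U\cap V)$; (LWC3) for every $U'\in\mathrm{Op}^c(U)$ there is $W\in\mathrm{Op}^c(U)$ with $U'\subset\subset W$. $\mathrm{Mod}(k_X)$ is the category of sheaves of $k$-vector spaces on $X$. A sheaf $F$ on $X$ is c-soft if for all $V,W\in\mathrm{Op}^c(X)$ with $V\subset\subset W$ the restriction morphism $\Gamma(W;F)\to\varinjlim_{U\supset\supset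 V}\Gamma(U;F)$ (limit over open $U$ with $V\subset\subset U$) is surjective. *)

theory Defs
  imports "HOL-Analysis.Analysis" "HOL-Library.Function_Algebras"
begin

definition compactly_in :: "'a topology \<Rightarrow> 'a set \<Rightarrow> 'a set \<Rightarrow> bool" where
  "compactly_in X V U \<longleftrightarrow> openin X V \<and> openin X U \<and> V \<subseteq> U \<and>
     (\<forall>\<U>. (\<forall>W\<in>\<U>. openin X W \<and> W \<subseteq> U) \<and> \<Union>\<U> = U \<longrightarrow>
        (\<exists>\<J>. finite \<J> \<and> \<J> \<subseteq> \<U> \<and> V \<subseteq> \<Union>\<J>))"

definition locally_weakly_quasi_compact :: "'a topology \<Rightarrow> bool" where
  "locally_weakly_quasi_compact X \<longleftrightarrow>
     (\<forall>U. openin X U \<longrightarrow> (\<forall>x\<in>U. \<forall>N. openin X N \<and> x \<in> N \<longrightarrow>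
          (\<exists>V. compactly_in X V U \<and> x \<in> V \<and> V \<subseteq> N))) \<and>
     (\<forall>U V U' V'. compactly_in X U' U \<and> compactly_in X V' V \<longrightarrow>
          compactly_in X (U' \<inter> V') (U \<inter> V)) \<and>
     (\<forall>U U'. compactly_in X U' U \<longrightarrow> (\<exists>W. compactly_in X W U \<and> compactly_in X U' W))"

text \<open>A sheaf of k-vector spaces on X is given by sections S U (for open U), which are
  linear subspaces of an ambient k-vector space (type 'v with scalar multiplication smul),
  and restriction maps res U V : S U \<rightarrow> S V for open V \<subseteq> U.\<close>
definition is_sheaf ::
  "'a topology \<Rightarrow> ('k::field \<Rightarrow> 'v::ab_group_add \<Rightarrow> 'v) \<Rightarrow>
   ('a set \<Rightarrow> 'v set) \<Rightarrow> ('a set \<Rightarrow> 'a set \<Rightarrow> 'v \<Rightarrow> 'v) \<Rightarrow> bool" where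
  "is_sheaf X smul S res \<longleftrightarrow>
     vector_space smul \<and>
     (\<forall>U. openin X U \<longrightarrow> module.subspace smul (S U)) \<and>
     (\<forall>U V. openin X U \<and> openin X V \<and> V \<subseteq> U \<longrightarrow>
        (\<forall>s\<in>S U. res U V s \<in> S V) \<and>
        (\<forall>s\<in>S U. \<forall>t\<in>S U. res U V (s + t) = res U V s + res U V t) \<and>
        (\<forall>c. \<forall>s\<in>S U. res U V (smul c s) = smul c (res U V s))) \<and>
     (\<forall>U. openin X U \<longrightarrow> (\<forall>s\<in>S U. res U U s = s)) \<and>
     (\<forall>U V W. openin X U \<and> openin X V \<and> openin X W \<and> W \<subseteq> V \<and> V \<subseteq> U \<longrightarrow>
        (\<forall>s\<in>S U. res V W (res U V s) = res U W s)) \<and>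
     (\<forall>U \<U>. openin X U \<and> (\<forall>W\<in>\<U>. openin X W \<and> W \<subseteq> U) \<and> \<Union>\<U> = U \<longrightarrow>
        (\<forall>s\<in>S U. \<forall>t\<in>S U. (\<forall>W\<in>\<U>. res U W s = res U W t) \<longrightarrow> s = t) \<and>
        (\<forall>f. (\<forall>W\<in>\<U>. f W \<in> S W) \<and>
             (\<forall>W1\<in>\<U>. \<forall>W2\<in>\<U>. res W1 (W1 \<inter> W2) (f W1) = res W2 (W1 \<inter> W2) (f W2)) \<longrightarrow>
             (\<exists>s\<in>S U. \<forall>W\<in>\<U>. res U W s = f W)))"

definition sheaf_hom ::
  "'a topology \<Rightarrow> ('k::field \<Rightarrow> 'v::ab_group_add \<Rightarrow> 'v) \<Rightarrow>
   ('a set \<Rightarrow> 'v set) \<Rightarrow> ('a set \<Rightarrow> 'a set \<Rightarrow> 'v \<Rightarrow> 'v) \<Rightarrow>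
   ('k \<Rightarrow> 'w::ab_group_add \<Rightarrow> 'w) \<Rightarrow>
   ('a set \<Rightarrow> 'w set) \<Rightarrow> ('a set \<Rightarrow> 'a set \<Rightarrow> 'w \<Rightarrow> 'w) \<Rightarrow>
   ('a set \<Rightarrow> 'v \<Rightarrow> 'w) \<Rightarrow> bool" where
  "sheaf_hom X smul1 S1 res1 smul2 S2 res2 \<phi> \<longleftrightarrow>
     is_sheaf X smul1 S1 res1 \<and> is_sheaf X smul2 S2 res2 \<and>
     (\<forall>U. openin X U \<longrightarrow>
        (\<forall>s\<in>S1 U. \<phi> U s \<in> S2 U) \<and>
        (\<forall>s\<in>S1 U. \<forall>t\<in>S1 U. \<phi> U (s + t) = \<phi> U s + \<phi> U t) \<and>
        (\<forall>c. \<forall>s\<in>S1 U. \<phi> U (smul1 c s) = smul2 c (\<phi> U s))) \<and>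
     (\<forall>U V. openin X U \<and> openin X V \<and> V \<subseteq> U \<longrightarrow>
        (\<forall>s\<in>S1 U. \<phi> V (res1 U V s) = res2 U V (\<phi> U s)))"

definition germ_eq ::
  "'a topology \<Rightarrow> ('a set \<Rightarrow> 'a set \<Rightarrow> 'v \<Rightarrow> 'v) \<Rightarrow> 'a \<Rightarrow> 'a set \<Rightarrow> 'v \<Rightarrow> 'a set \<Rightarrow> 'v \<Rightarrow> bool" where
  "germ_eq X res x U s V t \<longleftrightarrow>
     (\<exists>W. openin X W \<and> x \<in> W \<and> W \<subseteq> U \<inter> V \<and> res U W s = res V W t)"

definition germ_zero ::
  "'a topology \<Rightarrow> ('a set \<Rightarrow> 'a set \<Rightarrow> 'v::zero \<Rightarrow> 'v) \<Rightarrow> 'a \<Rightarrow> 'a set \<Rightarrow> 'v \<Rightarrow> bool" where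
  "germ_zero X res x U s \<longleftrightarrow> (\<exists>W. openin X W \<and> x \<in> W \<and> W \<subseteq> U \<and> res U W s = 0)"

text \<open>phi is a monomorphism: it is injective on all stalks.\<close>
definition stalk_injective ::
  "'a topology \<Rightarrow> ('a set \<Rightarrow> 'v set) \<Rightarrow> ('a set \<Rightarrow> 'a set \<Rightarrow> 'w::zero \<Rightarrow> 'w) \<Rightarrow>
   ('a set \<Rightarrow> 'a set \<Rightarrow> 'v::zero \<Rightarrow> 'v) \<Rightarrow> ('a set \<Rightarrow> 'v \<Rightarrow> 'w) \<Rightarrow> bool" where
  "stalk_injective X S1 res2 res1 \<phi> \<longleftrightarrow>
     (\<forall>x\<in>topspace X. \<forall>U. \<forall>s\<in>S1 U. openin X U \<and> x \<in> U \<and> germ_zero X res2 x U (\<phi> U s)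
        \<longrightarrow> germ_zero X res1 x U s)"

text \<open>0 \<rightarrow> F1 \<rightarrow> F2 \<rightarrow> F3 \<rightarrow> 0 is an exact sequence in Mod(k_X), i.e. exact on every stalk.\<close>
definition short_exact ::
  "'a topology \<Rightarrow>
   ('k::field \<Rightarrow> 'u::ab_group_add \<Rightarrow> 'u) \<Rightarrow> ('a set \<Rightarrow> 'u set) \<Rightarrow> ('a set \<Rightarrow> 'a set \<Rightarrow> 'u \<Rightarrow> 'u) \<Rightarrow>
   ('k \<Rightarrow> 'v::ab_group_add \<Rightarrow> 'v) \<Rightarrow> ('a set \<Rightarrow> 'v set) \<Rightarrow> ('a set \<Rightarrow> 'a set \<Rightarrow> 'v \<Rightarrow> 'v) \<Rightarrow>
   ('k \<Rightarrow> 'w::ab_group_add \<Rightarrow> 'w) \<Rightarrow> ('a set \<Rightarrow> 'w set) \<Rightarrow> ('a set \<Rightarrow> 'a set \<Rightarrow> 'w \<Rightarrow> 'w) \<Rightarrow>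
   ('a set \<Rightarrow> 'u \<Rightarrow> 'v) \<Rightarrow> ('a set \<Rightarrow> 'v \<Rightarrow> 'w) \<Rightarrow> bool" where
  "short_exact X sc1 S1 r1 sc2 S2 r2 sc3 S3 r3 \<phi> \<psi> \<longleftrightarrow>
     sheaf_hom X sc1 S1 r1 sc2 S2 r2 \<phi> \<and> sheaf_hom X sc2 S2 r2 sc3 S3 r3 \<psi> \<and>
     stalk_injective X S1 r2 r1 \<phi> \<and>
     (\<forall>x\<in>topspace X. \<forall>U. \<forall>s\<in>S1 U. openin X U \<and> x \<in> U \<longrightarrow>
        germ_zero X r3 x U (\<psi> U (\<phi> U s))) \<and>
     (\<forall>x\<in>topspace X. \<forall>U. \<forall>t\<in>S2 U. openin X U \<and> x \<in> U \<and> germ_zero X r3 x U (\<psi> U t) \<longrightarrow>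
        (\<exists>V. \<exists>s\<in>S1 V. openin X V \<and> x \<in> V \<and> germ_eq X r2 x V (\<phi> V s) U t)) \<and>
     (\<forall>x\<in>topspace X. \<forall>U. \<forall>u\<in>S3 U. openin X U \<and> x \<in> U \<longrightarrow>
        (\<exists>V. \<exists>t\<in>S2 V. openin X V \<and> x \<in> V \<and> germ_eq X r3 x V (\<psi> V t) U u))"

text \<open>Gamma(X;F) is S (topspace X); exactness of 0 \<rightarrow> Gamma(F1) \<rightarrow> Gamma(F2) \<rightarrow> Gamma(F3) \<rightarrow> 0.\<close>
definition global_sections_exact ::
  "'a topology \<Rightarrow> ('a set \<Rightarrow> 'u::zero set) \<Rightarrow> ('a set \<Rightarrow> 'v::zero set) \<Rightarrow> ('a set \<Rightarrow> 'w::zero set) \<Rightarrow>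
   ('a set \<Rightarrow> 'u \<Rightarrow> 'v) \<Rightarrow> ('a set \<Rightarrow> 'v \<Rightarrow> 'w) \<Rightarrow> bool" where
  "global_sections_exact X S1 S2 S3 \<phi> \<psi> \<longleftrightarrow>
     (let T = topspace X in
       inj_on (\<phi> T) (S1 T) \<and>
       \<phi> T ` S1 T = {t \<in> S2 T. \<psi> T t = 0} \<and>
       \<psi> T ` S2 T = S3 T)"

text \<open>c-soft: for V, W in Op^c(X) with V relatively compact in W, the map
  Gamma(W;F) \<rightarrow> colim_{U, V relatively compact in U} Gamma(U;F) is surjective.
  An element of the (directed) colimit is represented by a pair (U,s), and the image of
  t in Gamma(W;F) equals it iff s and t agree on some U'' with V relatively compact in U''
  and U'' contained in U \<inter> W.\<close>
definition c_soft ::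
  "'a topology \<Rightarrow> ('a set \<Rightarrow> 'v set) \<Rightarrow> ('a set \<Rightarrow> 'a set \<Rightarrow> 'v \<Rightarrow> 'v) \<Rightarrow> bool" where
  "c_soft X S res \<longleftrightarrow>
     (\<forall>V W. compactly_in X V (topspace X) \<and> compactly_in X W (topspace X) \<and>
            compactly_in X V W \<longrightarrow>
        (\<forall>U. \<forall>s\<in>S U. compactly_in X V U \<longrightarrow>
           (\<exists>t\<in>S W. \<exists>U''. compactly_in X V U'' \<and> U'' \<subseteq> U \<inter> W \<and>
                res U U'' s = res W U'' t)))"

end

theory Submission
  imports Defs
begin


lemma vs_fun:
  assumes "vector_space (sc :: 'k::field \<Rightarrow> 'v::ab_group_add \<Rightarrow> 'v)"
  shows "vector_space (\<lambda>c (f::'b \<Rightarrow> 'v) x. sc c (f x))"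
proof -
  interpret vector_space sc by fact
  show ?thesis by unfold_locales (auto simp: fun_eq_iff scale_right_distrib scale_left_distrib)
qed

lemma exists_proj:
  assumes vs: "vector_space s" and K: "module.subspace s K"
  shows "\<exists>p. Vector_Spaces.linear s s p \<and> (\<forall>v. p v = 0 \<longleftrightarrow> v \<in> K)"
proof -
  interpret vector_space s by fact
  interpret vp: vector_space_pair s s by unfold_locales
  obtain B where B: "B \<subseteq> K" "independent B" "K \<subseteq> span B"
    using maximal_independent_subset[of K] by blast
  have spanB: "span B = K" using span_minimal[OF B(1) K] B(3) by auto
  let ?q = "vp.construct B id"
  have lq: "Vector_Spaces.linear s s ?q" by (rule vp.linear_construct[OF B(2)])
  have qK: "?q v \<in> K" for v using vp.construct_in_span[OF B(2), of id v] spanB by simp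
  have qid: "?q k = k" if "k \<in> K" for k
  proof -
    have "?q k = id k"
      by (rule vp.linear_eq_on[OF lq linear_id]) (use that spanB vp.construct_basis[OF B(2)] in auto)
    then show ?thesis by simp
  qed
  interpret lq: Vector_Spaces.linear s s ?q by (rule lq)
  have lp: "Vector_Spaces.linear s s (\<lambda>v. v - ?q v)"
    unfolding Vector_Spaces.linear_iff
    by (auto simp: lq.add lq.scale scale_right_diff_distrib vector_space_axioms)
  show ?thesis
    by (rule exI[of _ "\<lambda>v. v - ?q v"]) (use lp qK qid in \<open>auto, metis\<close>)
qed



locale shf =
  fixes X :: "'a topology" and sc :: "'k::field \<Rightarrow> 'v::ab_group_add \<Rightarrow> 'v"
    and S :: "'a set \<Rightarrow> 'v set" and res :: "'a set \<Rightarrow> 'a set \<Rightarrow> 'v \<Rightarrow> 'v"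
  assumes sh: "is_sheaf X sc S res"
begin

lemmas shD = sh[unfolded is_sheaf_def]
lemma vs: "vector_space sc" using shD by (rule conjunct1)
lemma sub: "openin X U \<Longrightarrow> module.subspace sc (S U)" using shD[THEN conjunct2, THEN conjunct1, rule_format, of U] by blast
lemma res_in: "openin X U \<Longrightarrow> openin X V \<Longrightarrow> V \<subseteq> U \<Longrightarrow> s \<in> S U \<Longrightarrow> res U V s \<in> S V"
  using shD[THEN conjunct2, THEN conjunct2, THEN conjunct1, rule_format, of U V, THEN conjunct1] by blast
lemma res_add: "openin X U \<Longrightarrow> openin X V \<Longrightarrow> V \<subseteq> U \<Longrightarrow> s \<in> S U \<Longrightarrow> t \<in> S U \<Longrightarrow> res U V (s + t) = res U V s + res U V t"
  using shD[THEN conjunct2, THEN conjunct2, THEN conjunct1, rule_format, of U V, THEN conjunct2, THEN conjunct1] by blast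
lemma res_scale: "openin X U \<Longrightarrow> openin X V \<Longrightarrow> V \<subseteq> U \<Longrightarrow> s \<in> S U \<Longrightarrow> res U V (sc c s) = sc c (res U V s)"
  using shD[THEN conjunct2, THEN conjunct2, THEN conjunct1, rule_format, of U V, THEN conjunct2, THEN conjunct2] by blast
lemma res_id: "openin X U \<Longrightarrow> s \<in> S U \<Longrightarrow> res U U s = s"
  using shD[THEN conjunct2, THEN conjunct2, THEN conjunct2, THEN conjunct1, rule_format, of U s] by blast
lemma res_trans: "openin X U \<Longrightarrow> openin X V \<Longrightarrow> openin X W \<Longrightarrow> W \<subseteq> V \<Longrightarrow> V \<subseteq> U \<Longrightarrow> s \<in> S U \<Longrightarrow> res V W (res U V s) = res U W s"
  using shD[THEN conjunct2, THEN conjunct2, THEN conjunct2, THEN conjunct2, THEN conjunct1, rule_format, of U V W s] by blast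
lemmas shL = shD[THEN conjunct2, THEN conjunct2, THEN conjunct2, THEN conjunct2, THEN conjunct2]
lemma sep: "openin X U \<Longrightarrow> (\<And>W. W \<in> \<U> \<Longrightarrow> openin X W \<and> W \<subseteq> U) \<Longrightarrow> \<Union>\<U> = U \<Longrightarrow>
   s \<in> S U \<Longrightarrow> t \<in> S U \<Longrightarrow> (\<And>W. W \<in> \<U> \<Longrightarrow> res U W s = res U W t) \<Longrightarrow> s = t"
proof -
  assume a: "openin X U" "\<And>W. W \<in> \<U> \<Longrightarrow> openin X W \<and> W \<subseteq> U" "\<Union>\<U> = U"
    "s \<in> S U" "t \<in> S U" "\<And>W. W \<in> \<U> \<Longrightarrow> res U W s = res U W t"
  have "openin X U \<and> (\<forall>W\<in>\<U>. openin X W \<and> W \<subseteq> U) \<and> \<Union>\<U> = U" using a by blast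
  from shL[rule_format, OF this, THEN conjunct1, rule_format, OF a(4,5)] a(6) show ?thesis by blast
qed
lemma glue: "openin X U \<Longrightarrow> (\<And>W. W \<in> \<U> \<Longrightarrow> openin X W \<and> W \<subseteq> U) \<Longrightarrow> \<Union>\<U> = U \<Longrightarrow>
   (\<And>W. W \<in> \<U> \<Longrightarrow> f W \<in> S W) \<Longrightarrow>
   (\<And>W1 W2. W1 \<in> \<U> \<Longrightarrow> W2 \<in> \<U> \<Longrightarrow> res W1 (W1 \<inter> W2) (f W1) = res W2 (W1 \<inter> W2) (f W2)) \<Longrightarrow>
   \<exists>s\<in>S U. \<forall>W\<in>\<U>. res U W s = f W"
proof -
  assume a: "openin X U" "\<And>W. W \<in> \<U> \<Longrightarrow> openin X W \<and> W \<subseteq> U" "\<Union>\<U> = U"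
    "\<And>W. W \<in> \<U> \<Longrightarrow> f W \<in> S W"
    "\<And>W1 W2. W1 \<in> \<U> \<Longrightarrow> W2 \<in> \<U> \<Longrightarrow> res W1 (W1 \<inter> W2) (f W1) = res W2 (W1 \<inter> W2) (f W2)"
  have "openin X U \<and> (\<forall>W\<in>\<U>. openin X W \<and> W \<subseteq> U) \<and> \<Union>\<U> = U" using a by blast
  note g = shL[rule_format, OF this, THEN conjunct2, rule_format, of f]
  show ?thesis by (rule g) (use a in blast)
qed

lemma zero_in: "openin X U \<Longrightarrow> 0 \<in> S U"
  using sub module.subspace_0[OF vs[unfolded module_iff_vector_space[symmetric]]] by blast
lemma add_in: "openin X U \<Longrightarrow> s \<in> S U \<Longrightarrow> t \<in> S U \<Longrightarrow> s + t \<in> S U"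
  using sub module.subspace_add[OF vs[unfolded module_iff_vector_space[symmetric]]] by blast
lemma diff_in: "openin X U \<Longrightarrow> s \<in> S U \<Longrightarrow> t \<in> S U \<Longrightarrow> s - t \<in> S U"
  using sub module.subspace_diff[OF vs[unfolded module_iff_vector_space[symmetric]]] by blast
lemma neg_in: "openin X U \<Longrightarrow> s \<in> S U \<Longrightarrow> - s \<in> S U"
  using sub module.subspace_neg[OF vs[unfolded module_iff_vector_space[symmetric]]] by blast
lemma scale_in: "openin X U \<Longrightarrow> s \<in> S U \<Longrightarrow> sc c s \<in> S U"
  using sub module.subspace_scale[OF vs[unfolded module_iff_vector_space[symmetric]]] by blast
lemma res_zero: "openin X U \<Longrightarrow> openin X V \<Longrightarrow> V \<subseteq> U \<Longrightarrow> res U V 0 = 0"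
  using res_add[of U V 0 0] zero_in[of U] by simp
lemma res_diff: "openin X U \<Longrightarrow> openin X V \<Longrightarrow> V \<subseteq> U \<Longrightarrow> s \<in> S U \<Longrightarrow> t \<in> S U \<Longrightarrow> res U V (s - t) = res U V s - res U V t"
  using res_add[of U V "s - t" t] diff_in[of U s t] by (simp add: algebra_simps)

end



lemma ci_D: "compactly_in X V U \<Longrightarrow> openin X V \<and> openin X U \<and> V \<subseteq> U"
  unfolding compactly_in_def by (elim conjE) (intro conjI)

lemma ci_cover: "compactly_in X V U \<Longrightarrow> (\<And>W. W\<in>\<U> \<Longrightarrow> openin X W \<and> W \<subseteq> U) \<Longrightarrow> \<Union>\<U> = U \<Longrightarrow>
   \<exists>\<J>. finite \<J> \<and> \<J> \<subseteq> \<U> \<and> V \<subseteq> \<Union>\<J>"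
proof -
  assume a: "compactly_in X V U" "\<And>W. W\<in>\<U> \<Longrightarrow> openin X W \<and> W \<subseteq> U" "\<Union>\<U> = U"
  have h: "(\<forall>W\<in>\<U>. openin X W \<and> W \<subseteq> U) \<and> \<Union>\<U> = U" using a(2,3) by blast
  show ?thesis using a(1)[unfolded compactly_in_def, THEN conjunct2, THEN conjunct2, THEN conjunct2, rule_format, OF h] .
qed

lemma ci_cover2: "compactly_in X V U \<Longrightarrow> (\<forall>W\<in>\<U>. openin X W \<and> W \<subseteq> U) \<and> \<Union>\<U> = U \<Longrightarrow>
   \<exists>\<J>. finite \<J> \<and> \<J> \<subseteq> \<U> \<and> V \<subseteq> \<Union>\<J>"
  by (rule ci_cover) auto

lemma ci_mono_right:
  assumes "compactly_in X V U" "U \<subseteq> U'" "openin X U'"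
  shows "compactly_in X V U'"
  unfolding compactly_in_def
proof (intro conjI allI impI)
  show "openin X V" "openin X U'" "V \<subseteq> U'" using assms ci_D[OF assms(1)] by auto
  fix \<U> assume h: "(\<forall>W\<in>\<U>. openin X W \<and> W \<subseteq> U') \<and> \<Union>\<U> = U'"
  have oU: "openin X U" using ci_D[OF assms(1)] by blast
  obtain \<J>' where J': "finite \<J>'" "\<J>' \<subseteq> (\<lambda>W. W \<inter> U) ` \<U>" "V \<subseteq> \<Union>\<J>'"
  proof (rule ci_cover[OF assms(1), of "(\<lambda>W. W \<inter> U) ` \<U>", THEN exE])
    show "openin X W \<and> W \<subseteq> U" if "W \<in> (\<lambda>W. W \<inter> U) ` \<U>" for W
      using that h oU by auto
    show "\<Union> ((\<lambda>W. W \<inter> U) ` \<U>) = U" using h assms(2) by auto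
  qed blast
  obtain \<J> where J: "\<J> \<subseteq> \<U>" "finite \<J>" "\<J>' = (\<lambda>W. W \<inter> U) ` \<J>"
    using finite_subset_image[OF J'(1,2)] by auto
  show "\<exists>\<J>. finite \<J> \<and> \<J> \<subseteq> \<U> \<and> V \<subseteq> \<Union>\<J>"
    using J J'(3) by (intro exI[of _ \<J>]) auto
qed

lemma ci_mono_left: "compactly_in X V U \<Longrightarrow> V' \<subseteq> V \<Longrightarrow> openin X V' \<Longrightarrow> compactly_in X V' U"
proof -
  assume a: "compactly_in X V U" "V' \<subseteq> V" "openin X V'"
  have d: "openin X U" "V \<subseteq> U" using ci_D[OF a(1)] by simp_all
  show ?thesis unfolding compactly_in_def
  proof (intro conjI allI impI)
    fix \<U> assume h: "(\<forall>W\<in>\<U>. openin X W \<and> W \<subseteq> U) \<and> \<Union>\<U> = U"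
    obtain J where J: "finite J" "J \<subseteq> \<U>" "V \<subseteq> \<Union>J"
    proof (rule ci_cover[OF a(1), of \<U>, THEN exE])
      show "openin X W \<and> W \<subseteq> U" if "W \<in> \<U>" for W using h that by simp
      show "\<Union>\<U> = U" using h by simp
    qed blast
    show "\<exists>\<J>. finite \<J> \<and> \<J> \<subseteq> \<U> \<and> V' \<subseteq> \<Union>\<J>"
      by (rule exI[of _ J]) (use J a(2) in auto)
  next
    show "openin X V'" by (rule a(3))
    show "openin X U" by (rule d(1))
    show "V' \<subseteq> U" using a(2) d(2) by (rule subset_trans)
  qed
qed

lemma ci_empty: "openin X U \<Longrightarrow> compactly_in X {} U"
  unfolding compactly_in_def by (intro conjI allI impI exI[of _ "{}"]) auto

lemma ci_Un:
  assumes "compactly_in X A U" "compactly_in X B U"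
  shows "compactly_in X (A \<union> B) U"
  unfolding compactly_in_def
proof (intro conjI allI impI)
  show "openin X (A \<union> B)" "openin X U" "A \<union> B \<subseteq> U" using ci_D[OF assms(1)] ci_D[OF assms(2)] by (auto intro: openin_Un)
  fix \<U> assume h: "(\<forall>W\<in>\<U>. openin X W \<and> W \<subseteq> U) \<and> \<Union>\<U> = U"
  obtain J1 where "finite J1" "J1 \<subseteq> \<U>" "A \<subseteq> \<Union>J1" using ci_cover2[OF assms(1) h] by blast
  moreover obtain J2 where "finite J2" "J2 \<subseteq> \<U>" "B \<subseteq> \<Union>J2" using ci_cover2[OF assms(2) h] by blast
  ultimately show "\<exists>\<J>. finite \<J> \<and> \<J> \<subseteq> \<U> \<and> A \<union> B \<subseteq> \<Union>\<J>"
    by (intro exI[of _ "J1 \<union> J2"]) auto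
qed

lemma ci_Union: "finite \<A> \<Longrightarrow> openin X U \<Longrightarrow> (\<And>A. A \<in> \<A> \<Longrightarrow> compactly_in X A U) \<Longrightarrow> compactly_in X (\<Union>\<A>) U"
  by (induction \<A> rule: finite_induct) (auto intro: ci_empty ci_Un)

locale lwc =
  fixes X :: "'a topology"
  assumes lw: "locally_weakly_quasi_compact X"
begin

lemmas lwD = lw[unfolded locally_weakly_quasi_compact_def]
lemma lwc1: "openin X U \<Longrightarrow> x \<in> U \<Longrightarrow> \<exists>V. compactly_in X V U \<and> x \<in> V"
proof -
  assume a: "openin X U" "x \<in> U"
  have "openin X U \<and> x \<in> U" using a by blast
  from lwD[THEN conjunct1, rule_format, OF a, of U] a show ?thesis by blast
qed

lemma lwc2: "compactly_in X U' U \<Longrightarrow> compactly_in X V' V \<Longrightarrow> compactly_in X (U' \<inter> V') (U \<inter> V)"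
  using lwD[THEN conjunct2, THEN conjunct1, rule_format, of U' U V' V] by blast

lemma lwc3: "compactly_in X U' U \<Longrightarrow> \<exists>W. compactly_in X W U \<and> compactly_in X U' W"
  using lwD[THEN conjunct2, THEN conjunct2, rule_format, of U' U] by blast

lemma ci_Int: "compactly_in X V U \<Longrightarrow> compactly_in X V W \<Longrightarrow> compactly_in X V (U \<inter> W)"
  using lwc2[of V U V W] by simp

lemma shrink:
  assumes K: "compactly_in X K (A \<union> B)" and oA: "openin X A" and oB: "openin X B"
  shows "\<exists>KA KB. compactly_in X KA A \<and> compactly_in X KB B \<and> K \<subseteq> KA \<union> KB"
proof -
  let ?C = "{N. compactly_in X N A} \<union> {N. compactly_in X N B}"
  have c1: "openin X W \<and> W \<subseteq> A \<union> B" if "W \<in> ?C" for W using that ci_D by blast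
  have c2: "\<Union>?C = A \<union> B"
  proof
    show "\<Union>?C \<subseteq> A \<union> B" using c1 by blast
    show "A \<union> B \<subseteq> \<Union>?C"
    proof
      fix x assume "x \<in> A \<union> B"
      then show "x \<in> \<Union>?C"
      proof
        assume "x \<in> A" then obtain V where "compactly_in X V A" "x \<in> V" using lwc1 oA by blast
        then show ?thesis by blast
      next
        assume "x \<in> B" then obtain V where "compactly_in X V B" "x \<in> V" using lwc1 oB by blast
        then show ?thesis by blast
      qed
    qed
  qed
  have cc: "(\<forall>W\<in>?C. openin X W \<and> W \<subseteq> A \<union> B) \<and> \<Union>?C = A \<union> B" using c1 c2 by blast
  obtain J where J: "finite J" "J \<subseteq> ?C" "K \<subseteq> \<Union>J" using ci_cover2[OF K cc] by blast
  have "compactly_in X (\<Union>{N\<in>J. compactly_in X N A}) A" by (rule ci_Union) (use J oA in auto)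
  moreover have "compactly_in X (\<Union>{N\<in>J. compactly_in X N B}) B" by (rule ci_Union) (use J oB in auto)
  moreover have "K \<subseteq> \<Union>{N\<in>J. compactly_in X N A} \<union> \<Union>{N\<in>J. compactly_in X N B}" using J by blast
  ultimately show ?thesis by blast
qed

end


lemma linD:
  assumes "Vector_Spaces.linear s s p"
  shows "p (a + b) = p a + p b" "p (s c a) = s c (p a)" "p (a - b) = p a - p b"
proof -
  have l: "\<forall>x y. p (x + y) = p x + p y" "\<forall>c x. p (s c x) = s c (p x)"
    using assms unfolding Vector_Spaces.linear_iff by blast+
  show "p (a + b) = p a + p b" "p (s c a) = s c (p a)" using l by blast+
  have "p (a - b) + p b = p a" using l(1)[rule_format, of "a - b" b] by simp
  then show "p (a - b) = p a - p b" by (simp add: algebra_simps)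
qed

lemma part1:
  fixes X :: "'a topology" and sc :: "'k::field \<Rightarrow> 'v::ab_group_add \<Rightarrow> 'v"
  assumes lw: "locally_weakly_quasi_compact X" and shS: "is_sheaf X sc S res"
  shows "\<exists>(G :: 'a set \<Rightarrow> ('a \<Rightarrow> 'a set \<Rightarrow> 'v) set) resG \<phi>.
           sheaf_hom X sc S res (\<lambda>c f x U. sc c (f x U)) G resG \<phi> \<and>
           stalk_injective X S resG res \<phi> \<and> c_soft X G resG"
proof -
  interpret shf X sc S res by (rule shf.intro[OF shS])
  interpret lwc X by (rule lwc.intro[OF lw])
  interpret V: vector_space sc by (rule vs)
  define Kx where "Kx x = {g::'a set \<Rightarrow> 'v. \<exists>W. openin X W \<and> x \<in> W \<and> (\<forall>V. openin X V \<and> x \<in> V \<and> V \<subseteq> W \<longrightarrow> g V = 0)}" for x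
  define s1 where "s1 = (\<lambda>c (g::'a set \<Rightarrow> 'v) V. sc c (g V))"
  have vs1: "vector_space s1" unfolding s1_def by (rule vs_fun[OF vs])
  have subK: "module.subspace s1 (Kx x)" if x: "x \<in> topspace X" for x
    unfolding module.subspace_def[OF vs1[folded module_iff_vector_space]]
  proof (intro conjI ballI allI)
    show "0 \<in> Kx x" unfolding Kx_def using x by (intro CollectI exI[of _ "topspace X"]) auto
    fix a b assume a: "a \<in> Kx x" and b: "b \<in> Kx x"
    obtain Wa where Wa: "openin X Wa" "x \<in> Wa" "\<forall>V. openin X V \<and> x \<in> V \<and> V \<subseteq> Wa \<longrightarrow> a V = 0"
      using a unfolding Kx_def by blast
    obtain Wb where Wb: "openin X Wb" "x \<in> Wb" "\<forall>V. openin X V \<and> x \<in> V \<and> V \<subseteq> Wb \<longrightarrow> b V = 0"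
      using b unfolding Kx_def by blast
    show "a + b \<in> Kx x" unfolding Kx_def
      by (intro CollectI exI[of _ "Wa \<inter> Wb"]) (use Wa Wb in auto)
  next
    fix c a assume a: "a \<in> Kx x"
    obtain Wa where Wa: "openin X Wa" "x \<in> Wa" "\<forall>V. openin X V \<and> x \<in> V \<and> V \<subseteq> Wa \<longrightarrow> a V = 0"
      using a unfolding Kx_def by blast
    show "s1 c a \<in> Kx x" unfolding Kx_def s1_def
      by (intro CollectI exI[of _ Wa]) (use Wa in auto)
  qed
  define P where "P x = (SOME p. Vector_Spaces.linear s1 s1 p \<and> (\<forall>v. p v = 0 \<longleftrightarrow> v \<in> Kx x))" for x
  have Pp: "Vector_Spaces.linear s1 s1 (P x) \<and> (\<forall>v. P x v = 0 \<longleftrightarrow> v \<in> Kx x)" if "x \<in> topspace X" for x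
    using someI_ex[OF exists_proj[OF vs1 subK[OF that]]] unfolding P_def .
  define \<delta> where "\<delta> U s = (\<lambda>V. if openin X V \<and> V \<subseteq> U then res U V s else 0)" for U s
  define \<phi> where "\<phi> U s = (\<lambda>x. if x \<in> U then P x (\<delta> U s) else 0)" for U s
  define G where "G U = {f::'a \<Rightarrow> 'a set \<Rightarrow> 'v. \<forall>x. x \<notin> U \<longrightarrow> f x = 0}" for U
  define resG where "resG U V f = (\<lambda>x. if x \<in> V then f x else (0::'a set \<Rightarrow> 'v))" for U V :: "'a set" and f :: "'a \<Rightarrow> 'a set \<Rightarrow> 'v"
  let ?sG = "\<lambda>c (f :: 'a \<Rightarrow> 'a set \<Rightarrow> 'v) x U. sc c (f x U)"
  have vsG: "vector_space ?sG" using vs_fun[OF vs_fun[OF vs]] by simp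
  have subG: "module.subspace ?sG (G U)" for U
    unfolding module.subspace_def[OF vsG[folded module_iff_vector_space]] G_def
    by (auto simp: fun_eq_iff)
  have sheafG: "is_sheaf X ?sG G resG"
  proof -
    have c3: "(\<forall>s\<in>G U. resG U V s \<in> G V) \<and>
        (\<forall>s\<in>G U. \<forall>t\<in>G U. resG U V (s + t) = resG U V s + resG U V t) \<and>
        (\<forall>c. \<forall>s\<in>G U. resG U V (?sG c s) = ?sG c (resG U V s))" for U V
      unfolding G_def resG_def by (auto simp: fun_eq_iff)
    have c4: "\<forall>s\<in>G U. resG U U s = s" for U unfolding G_def resG_def by (auto simp: fun_eq_iff)
    have c5: "W \<subseteq> V \<Longrightarrow> \<forall>s\<in>G U. resG V W (resG U V s) = resG U W s" for U V W
      unfolding resG_def by (auto simp: fun_eq_iff)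
    have c6: "(\<forall>s\<in>G U. \<forall>t\<in>G U. (\<forall>W\<in>\<U>. resG U W s = resG U W t) \<longrightarrow> s = t) \<and>
        (\<forall>f. (\<forall>W\<in>\<U>. f W \<in> G W) \<and>
             (\<forall>W1\<in>\<U>. \<forall>W2\<in>\<U>. resG W1 (W1 \<inter> W2) (f W1) = resG W2 (W1 \<inter> W2) (f W2)) \<longrightarrow>
             (\<exists>s\<in>G U. \<forall>W\<in>\<U>. resG U W s = f W))"
      if cov: "\<Union>\<U> = U" for U \<U>
    proof (intro conjI ballI allI impI)
      fix s t assume s: "s \<in> G U" and t: "t \<in> G U" and e: "\<forall>W\<in>\<U>. resG U W s = resG U W t"
      show "s = t"
      proof
        fix x show "s x = t x"
        proof (cases "x \<in> U")
          case True
          then obtain W where "W \<in> \<U>" "x \<in> W" using cov by blast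
          then show ?thesis using e unfolding resG_def by (metis (mono_tags))
        next
          case False then show ?thesis using s t unfolding G_def by simp
        qed
      qed
    next
      fix f assume h: "(\<forall>W\<in>\<U>. f W \<in> G W) \<and>
             (\<forall>W1\<in>\<U>. \<forall>W2\<in>\<U>. resG W1 (W1 \<inter> W2) (f W1) = resG W2 (W1 \<inter> W2) (f W2))"
      define g where "g x = (if \<exists>W\<in>\<U>. x \<in> W then f (SOME W. W \<in> \<U> \<and> x \<in> W) x else 0)" for x
      have gW: "g x = f W x" if "W \<in> \<U>" "x \<in> W" for W x
      proof -
        have ex: "\<exists>W. W \<in> \<U> \<and> x \<in> W" using that by blast
        define W' where "W' = (SOME W. W \<in> \<U> \<and> x \<in> W)"
        have W': "W' \<in> \<U>" "x \<in> W'" using someI_ex[OF ex] unfolding W'_def by blast+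
        have "resG W' (W' \<inter> W) (f W') x = resG W (W' \<inter> W) (f W) x"
          using h W'(1) that(1) by metis
        then have "f W' x = f W x" using W'(2) that(2) unfolding resG_def by simp
        then show ?thesis unfolding g_def W'_def[symmetric] using that by auto
      qed
      show "\<exists>s\<in>G U. \<forall>W\<in>\<U>. resG U W s = f W"
      proof (intro bexI ballI)
        show "g \<in> G U" unfolding G_def g_def using cov by auto
        fix W assume W: "W \<in> \<U>"
        show "resG U W g = f W"
        proof
          fix x show "resG U W g x = f W x"
          proof (cases "x \<in> W")
            case True then show ?thesis using gW[OF W True] unfolding resG_def by simp
          next
            case False
            have "f W \<in> G W" using h W by blast
            then show ?thesis using False unfolding resG_def G_def by simp
          qed
        qed
      qed
    qed
    show ?thesis unfolding is_sheaf_def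
      apply (intro conjI)
      subgoal by (rule vsG)
      subgoal by (intro allI impI, rule subG)
      subgoal by (intro allI impI, rule c3)
      subgoal by (intro allI impI, rule c4)
      subgoal by (intro allI impI, rule c5, simp)
      subgoal by (intro allI impI, rule c6, simp)
      done
  qed
  have inTop: "x \<in> topspace X" if "openin X U" "x \<in> U" for x U
    using openin_subset that by blast
  have \<delta>add: "\<delta> U (s + t) = \<delta> U s + \<delta> U t" if "openin X U" "s \<in> S U" "t \<in> S U" for U s t
    unfolding \<delta>_def using res_add that by (auto simp: fun_eq_iff)
  have \<delta>scale: "\<delta> U (sc c s) = s1 c (\<delta> U s)" if "openin X U" "s \<in> S U" for U s c
    unfolding \<delta>_def s1_def using res_scale that by (auto simp: fun_eq_iff)
  have \<delta>res: "\<delta> V (res U V s) - \<delta> U s \<in> Kx x"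
    if "openin X U" "openin X V" "V \<subseteq> U" "s \<in> S U" "x \<in> V" for U V s x
    unfolding Kx_def
  proof (intro CollectI exI[of _ V] conjI allI impI)
    fix V' assume "openin X V' \<and> x \<in> V' \<and> V' \<subseteq> V"
    then show "(\<delta> V (res U V s) - \<delta> U s) V' = 0"
      unfolding \<delta>_def using res_trans[of U V V' s] that by auto
  qed (use that in auto)
  have hom: "sheaf_hom X sc S res ?sG G resG \<phi>"
    unfolding sheaf_hom_def
  proof (intro conjI allI impI ballI)
    show "is_sheaf X sc S res" by (rule shS)
    show "is_sheaf X ?sG G resG" by (rule sheafG)
  next
    fix U s assume "openin X U" "s \<in> S U"
    show "\<phi> U s \<in> G U" unfolding \<phi>_def G_def by simp
  next
    fix U s t assume U: "openin X U" and st: "s \<in> S U" "t \<in> S U"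
    show "\<phi> U (s + t) = \<phi> U s + \<phi> U t"
    proof
      fix x show "\<phi> U (s + t) x = (\<phi> U s + \<phi> U t) x"
      proof (cases "x \<in> U")
        case True
        have l: "Vector_Spaces.linear s1 s1 (P x)" using Pp inTop[OF U True] by blast
        show ?thesis unfolding \<phi>_def using True \<delta>add[OF U st] linD(1)[OF l] by simp
      qed (simp add: \<phi>_def)
    qed
  next
    fix U c s assume U: "openin X U" and s: "s \<in> S U"
    show "\<phi> U (sc c s) = ?sG c (\<phi> U s)"
    proof
      fix x show "\<phi> U (sc c s) x = ?sG c (\<phi> U s) x"
      proof (cases "x \<in> U")
        case True
        have l: "Vector_Spaces.linear s1 s1 (P x)" using Pp inTop[OF U True] by blast
        show ?thesis unfolding \<phi>_def using True \<delta>scale[OF U s] linD(2)[OF l] by (simp add: s1_def)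
      qed (simp add: \<phi>_def fun_eq_iff)
    qed
  next
    fix U V s assume UV: "openin X U \<and> openin X V \<and> V \<subseteq> U" and s: "s \<in> S U"
    show "\<phi> V (res U V s) = resG U V (\<phi> U s)"
    proof
      fix x show "\<phi> V (res U V s) x = resG U V (\<phi> U s) x"
      proof (cases "x \<in> V")
        case True
        have xt: "x \<in> topspace X" using inTop UV True by blast
        have l: "Vector_Spaces.linear s1 s1 (P x)" using Pp xt by blast
        have "P x (\<delta> V (res U V s) - \<delta> U s) = 0" using Pp[OF xt] \<delta>res[of U V s x] UV s True by blast
        then have "P x (\<delta> V (res U V s)) = P x (\<delta> U s)" using linD(3)[OF l] by simp
        then show ?thesis unfolding \<phi>_def resG_def using True UV by auto
      qed (simp add: \<phi>_def resG_def)
    qed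
  qed
  have inj: "stalk_injective X S resG res \<phi>"
    unfolding stalk_injective_def
  proof (intro ballI allI impI)
    fix x U s assume x: "x \<in> topspace X" and s: "s \<in> S U"
      and h: "openin X U \<and> x \<in> U \<and> germ_zero X resG x U (\<phi> U s)"
    obtain W where W: "openin X W" "x \<in> W" "W \<subseteq> U" "resG U W (\<phi> U s) = 0"
      using h unfolding germ_zero_def by blast
    have "resG U W (\<phi> U s) x = 0" using W(4) by simp
    then have "P x (\<delta> U s) = 0" using W(2,3) unfolding resG_def \<phi>_def by auto
    then have "\<delta> U s \<in> Kx x" using Pp[OF x] by blast
    then obtain W' where W': "openin X W'" "x \<in> W'" "\<forall>V. openin X V \<and> x \<in> V \<and> V \<subseteq> W' \<longrightarrow> \<delta> U s V = 0"
      unfolding Kx_def by blast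
    have o: "openin X (W' \<inter> U)" using W'(1) h by blast
    have "\<delta> U s (W' \<inter> U) = 0" using W'(3) o W'(2) h by blast
    then have "res U (W' \<inter> U) s = 0" unfolding \<delta>_def using o by simp
    then show "germ_zero X res x U s" unfolding germ_zero_def
      using o W'(2) h by blast
  qed
  have cs: "c_soft X G resG"
    unfolding c_soft_def
  proof (intro allI impI ballI)
    fix V W U f
    assume h: "compactly_in X V (topspace X) \<and> compactly_in X W (topspace X) \<and> compactly_in X V W"
      and f: "f \<in> G U" and VU: "compactly_in X V U"
    have VUW: "compactly_in X V (U \<inter> W)" using ci_Int[OF VU] h by blast
    define t where "t = resG U (U \<inter> W) f"
    have "t \<in> G W" unfolding t_def resG_def G_def by simp
    moreover have "resG U (U \<inter> W) f = resG W (U \<inter> W) t" unfolding t_def resG_def by (simp add: fun_eq_iff)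
    ultimately show "\<exists>t\<in>G W. \<exists>U''. compactly_in X V U'' \<and> U'' \<subseteq> U \<inter> W \<and> resG U U'' f = resG W U'' t"
      using VUW by blast
  qed
  show ?thesis using hom inj cs by blast
qed



locale shom =
  A: shf X sa Sa ra + B: shf X sb Sb rb
  for X :: "'a topology" and sa :: "'k::field \<Rightarrow> 'v::ab_group_add \<Rightarrow> 'v" and Sa ra
    and sb :: "'k \<Rightarrow> 'w::ab_group_add \<Rightarrow> 'w" and Sb rb +
  fixes h :: "'a set \<Rightarrow> 'v \<Rightarrow> 'w"
  assumes hom: "sheaf_hom X sa Sa ra sb Sb rb h"
begin

lemmas homD = hom[unfolded sheaf_hom_def, THEN conjunct2, THEN conjunct2]

lemma h_in: "openin X U \<Longrightarrow> s \<in> Sa U \<Longrightarrow> h U s \<in> Sb U"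
  using homD[THEN conjunct1, rule_format, of U] by blast
lemma h_add: "openin X U \<Longrightarrow> s \<in> Sa U \<Longrightarrow> t \<in> Sa U \<Longrightarrow> h U (s + t) = h U s + h U t"
  using homD[THEN conjunct1, rule_format, of U] by blast
lemma h_res: "openin X U \<Longrightarrow> openin X V \<Longrightarrow> V \<subseteq> U \<Longrightarrow> s \<in> Sa U \<Longrightarrow> h V (ra U V s) = rb U V (h U s)"
proof -
  assume a: "openin X U" "openin X V" "V \<subseteq> U" "s \<in> Sa U"
  have c: "openin X U \<and> openin X V \<and> V \<subseteq> U" using a by simp
  have "\<forall>s\<in>Sa U. h V (ra U V s) = rb U V (h U s)"
    using homD[THEN conjunct2, THEN spec[of _ U], THEN spec[of _ V], THEN mp, OF c] .
  then show ?thesis using a(4) by simp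
qed
lemma h_zero: "openin X U \<Longrightarrow> h U 0 = 0"
  using h_add[of U 0 0] A.zero_in[of U] by simp
lemma h_diff: "openin X U \<Longrightarrow> s \<in> Sa U \<Longrightarrow> t \<in> Sa U \<Longrightarrow> h U (s - t) = h U s - h U t"
  using h_add[of U "s - t" t] A.diff_in[of U s t] by (simp add: algebra_simps)

end

lemma shom_intro: "sheaf_hom X sa Sa ra sb Sb rb h \<Longrightarrow> shom X sa Sa ra sb Sb rb h"
proof -
  assume a: "sheaf_hom X sa Sa ra sb Sb rb h"
  have "is_sheaf X sa Sa ra" "is_sheaf X sb Sb rb"
    using a[unfolded sheaf_hom_def, THEN conjunct1] a[unfolded sheaf_hom_def, THEN conjunct2, THEN conjunct1] .
  then show ?thesis using a by (intro shom.intro shf.intro shom_axioms.intro)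
qed

locale sex = lwc X +
  F1: shf X sc1 S1 r1 + F2: shf X sc2 S2 r2 + F3: shf X sc3 S3 r3 +
  P: shom X sc1 S1 r1 sc2 S2 r2 \<phi> + Q: shom X sc2 S2 r2 sc3 S3 r3 \<psi>
  for X :: "'a topology"
    and sc1 :: "'k::field \<Rightarrow> 'u::ab_group_add \<Rightarrow> 'u" and S1 r1
    and sc2 :: "'k \<Rightarrow> 'w::ab_group_add \<Rightarrow> 'w" and S2 r2
    and sc3 :: "'k \<Rightarrow> 'z::ab_group_add \<Rightarrow> 'z" and S3 r3 and \<phi> \<psi> +
  assumes se: "short_exact X sc1 S1 r1 sc2 S2 r2 sc3 S3 r3 \<phi> \<psi>"
begin

lemmas seD = se[unfolded short_exact_def, THEN conjunct2, THEN conjunct2]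

lemma stinj: "stalk_injective X S1 r2 r1 \<phi>" using seD by blast

lemma inTop: "openin X U \<Longrightarrow> x \<in> U \<Longrightarrow> x \<in> topspace X"
  using openin_subset by blast

lemma gz_comp: "openin X U \<Longrightarrow> x \<in> U \<Longrightarrow> s \<in> S1 U \<Longrightarrow> germ_zero X r3 x U (\<psi> U (\<phi> U s))"
proof -
  assume a: "openin X U" "x \<in> U" "s \<in> S1 U"
  have x: "x \<in> topspace X" using inTop a by blast
  have "openin X U \<and> x \<in> U" using a by blast
  from seD[THEN conjunct2, THEN conjunct1, rule_format, OF x a(3) this] show ?thesis .
qed

lemma ex_mid: "openin X U \<Longrightarrow> x \<in> U \<Longrightarrow> t \<in> S2 U \<Longrightarrow> germ_zero X r3 x U (\<psi> U t) \<Longrightarrow>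
   \<exists>V. \<exists>s\<in>S1 V. openin X V \<and> x \<in> V \<and> germ_eq X r2 x V (\<phi> V s) U t"
proof -
  assume a: "openin X U" "x \<in> U" "t \<in> S2 U" "germ_zero X r3 x U (\<psi> U t)"
  have x: "x \<in> topspace X" using inTop a by blast
  have "openin X U \<and> x \<in> U \<and> germ_zero X r3 x U (\<psi> U t)" using a by blast
  from seD[THEN conjunct2, THEN conjunct2, THEN conjunct1, rule_format, OF x a(3) this] show ?thesis .
qed

lemma ex_surj: "openin X U \<Longrightarrow> x \<in> U \<Longrightarrow> u \<in> S3 U \<Longrightarrow>
   \<exists>V. \<exists>t\<in>S2 V. openin X V \<and> x \<in> V \<and> germ_eq X r3 x V (\<psi> V t) U u"
proof -
  assume a: "openin X U" "x \<in> U" "u \<in> S3 U"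
  have x: "x \<in> topspace X" using inTop a by blast
  have "openin X U \<and> x \<in> U" using a by blast
  from seD[THEN conjunct2, THEN conjunct2, THEN conjunct2, rule_format, OF x a(3) this] show ?thesis .
qed

lemma F1_loc_zero:
  assumes U: "openin X U" and s: "s \<in> S1 U" and loc: "\<And>x. x \<in> U \<Longrightarrow> germ_zero X r1 x U s"
  shows "s = 0"
proof -
  let ?C = "{W. openin X W \<and> W \<subseteq> U \<and> r1 U W s = 0}"
  show ?thesis
  proof (rule F1.sep[OF U, of ?C])
    show "openin X W \<and> W \<subseteq> U" if "W \<in> ?C" for W using that by blast
    show "\<Union>?C = U"
    proof
      show "\<Union>?C \<subseteq> U" by blast
      show "U \<subseteq> \<Union>?C"
      proof
        fix x assume x: "x \<in> U"
        obtain W where "openin X W" "x \<in> W" "W \<subseteq> U" "r1 U W s = 0"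
          using loc[OF x] unfolding germ_zero_def by blast
        then show "x \<in> \<Union>?C" by blast
      qed
    qed
    show "s \<in> S1 U" by (rule s)
    show "0 \<in> S1 U" by (rule F1.zero_in[OF U])
    show "r1 U W s = r1 U W 0" if "W \<in> ?C" for W using that F1.res_zero[OF U] by auto
  qed
qed

lemma F3_loc_zero:
  assumes U: "openin X U" and s: "s \<in> S3 U" and loc: "\<And>x. x \<in> U \<Longrightarrow> germ_zero X r3 x U s"
  shows "s = 0"
proof -
  let ?C = "{W. openin X W \<and> W \<subseteq> U \<and> r3 U W s = 0}"
  show ?thesis
  proof (rule F3.sep[OF U, of ?C])
    show "openin X W \<and> W \<subseteq> U" if "W \<in> ?C" for W using that by blast
    show "\<Union>?C = U"
    proof
      show "\<Union>?C \<subseteq> U" by blast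
      show "U \<subseteq> \<Union>?C"
      proof
        fix x assume x: "x \<in> U"
        obtain W where "openin X W" "x \<in> W" "W \<subseteq> U" "r3 U W s = 0"
          using loc[OF x] unfolding germ_zero_def by blast
        then show "x \<in> \<Union>?C" by blast
      qed
    qed
    show "s \<in> S3 U" by (rule s)
    show "0 \<in> S3 U" by (rule F3.zero_in[OF U])
    show "r3 U W s = r3 U W 0" if "W \<in> ?C" for W using that F3.res_zero[OF U] by auto
  qed
qed

lemma psiphi: "openin X U \<Longrightarrow> s \<in> S1 U \<Longrightarrow> \<psi> U (\<phi> U s) = 0"
  by (rule F3_loc_zero) (auto intro: gz_comp Q.h_in P.h_in)

lemma phi_inj: assumes U: "openin X U" and a: "a \<in> S1 U" and b: "b \<in> S1 U" and e: "\<phi> U a = \<phi> U b"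
  shows "a = b"
proof -
  have c: "a - b \<in> S1 U" using F1.diff_in[OF U a b] .
  have pc: "\<phi> U (a - b) = 0" using P.h_diff[OF U a b] e by simp
  have "a - b = 0"
  proof (rule F1_loc_zero[OF U c])
    fix x assume x: "x \<in> U"
    have "germ_zero X r2 x U (\<phi> U (a - b))" unfolding germ_zero_def pc
      using U x F2.res_id[OF U F2.zero_in[OF U]] by blast
    then show "germ_zero X r1 x U (a - b)"
      using stinj[unfolded stalk_injective_def] inTop[OF U x] c U x by blast
  qed
  then show ?thesis by simp
qed

lemma ker:
  assumes U: "openin X U" and t: "t \<in> S2 U" and z: "\<psi> U t = 0"
  shows "\<exists>s\<in>S1 U. \<phi> U s = t"
proof -
  let ?C = "{W. openin X W \<and> W \<subseteq> U \<and> (\<exists>s\<in>S1 W. \<phi> W s = r2 U W t)}"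
  define f where "f W = (SOME s. s \<in> S1 W \<and> \<phi> W s = r2 U W t)" for W
  have fW: "f W \<in> S1 W \<and> \<phi> W (f W) = r2 U W t" if "W \<in> ?C" for W
  proof -
    have "\<exists>s. s \<in> S1 W \<and> \<phi> W s = r2 U W t" using that by blast
    from someI_ex[OF this] show ?thesis unfolding f_def .
  qed
  have cov: "\<Union>?C = U"
  proof
    show "\<Union>?C \<subseteq> U" by blast
    show "U \<subseteq> \<Union>?C"
    proof
      fix x assume x: "x \<in> U"
      have "germ_zero X r3 x U (\<psi> U t)" unfolding germ_zero_def z
        using U x F3.res_id[OF U F3.zero_in[OF U]] by blast
      then obtain V s where s: "s \<in> S1 V" "openin X V" "x \<in> V" "germ_eq X r2 x V (\<phi> V s) U t"
        using ex_mid[OF U x t] by blast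
      then obtain W where W: "openin X W" "x \<in> W" "W \<subseteq> V \<inter> U" "r2 V W (\<phi> V s) = r2 U W t"
        unfolding germ_eq_def by blast
      have "r1 V W s \<in> S1 W" using F1.res_in[OF s(2) W(1)] W(3) s(1) by blast
      moreover have "\<phi> W (r1 V W s) = r2 U W t" using P.h_res[OF s(2) W(1) _ s(1)] W(3,4) by auto
      ultimately have "W \<in> ?C" using W by blast
      then show "x \<in> \<Union>?C" using W(2) by blast
    qed
  qed
  have Co: "openin X W \<and> W \<subseteq> U" if "W \<in> ?C" for W using that by blast
  obtain s where s: "s \<in> S1 U" "\<forall>W\<in>?C. r1 U W s = f W"
  proof (rule F1.glue[OF U, of ?C f, THEN bexE])
    show "openin X W \<and> W \<subseteq> U" if "W \<in> ?C" for W using that by blast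
    show "\<Union>?C = U" by (rule cov)
    show "f W \<in> S1 W" if "W \<in> ?C" for W using fW[OF that] by blast
    show "r1 W1 (W1 \<inter> W2) (f W1) = r1 W2 (W1 \<inter> W2) (f W2)" if "W1 \<in> ?C" "W2 \<in> ?C" for W1 W2
    proof (rule phi_inj)
      have o1: "openin X W1" "W1 \<subseteq> U" and o2: "openin X W2" "W2 \<subseteq> U" using that by blast+
      have o12: "openin X (W1 \<inter> W2)" using o1 o2 by blast
      show "openin X (W1 \<inter> W2)" by (rule o12)
      show "r1 W1 (W1 \<inter> W2) (f W1) \<in> S1 (W1 \<inter> W2)" using F1.res_in[OF o1(1) o12] fW[OF that(1)] by blast
      show "r1 W2 (W1 \<inter> W2) (f W2) \<in> S1 (W1 \<inter> W2)" using F1.res_in[OF o2(1) o12] fW[OF that(2)] by blast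
      have "\<phi> (W1 \<inter> W2) (r1 W1 (W1 \<inter> W2) (f W1)) = r2 U (W1 \<inter> W2) t"
        using P.h_res[OF o1(1) o12 _ ] fW[OF that(1)] F2.res_trans[OF U o1(1) o12 _ o1(2) t] by auto
      moreover have "\<phi> (W1 \<inter> W2) (r1 W2 (W1 \<inter> W2) (f W2)) = r2 U (W1 \<inter> W2) t"
        using P.h_res[OF o2(1) o12 _ ] fW[OF that(2)] F2.res_trans[OF U o2(1) o12 _ o2(2) t] by auto
      ultimately show "\<phi> (W1 \<inter> W2) (r1 W1 (W1 \<inter> W2) (f W1)) = \<phi> (W1 \<inter> W2) (r1 W2 (W1 \<inter> W2) (f W2))"
        by simp
    qed
  qed blast
  have "\<phi> U s = t"
  proof (rule F2.sep[OF U, of ?C])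
    show "openin X W \<and> W \<subseteq> U" if "W \<in> ?C" for W using that by blast
    show "\<Union>?C = U" by (rule cov)
    show "\<phi> U s \<in> S2 U" by (rule P.h_in[OF U s(1)])
    show "t \<in> S2 U" by (rule t)
    show "r2 U W (\<phi> U s) = r2 U W t" if "W \<in> ?C" for W
      using P.h_res[OF U, of W s] Co[OF that] s fW[OF that] that by auto
  qed
  then show ?thesis using s(1) by blast
qed

lemma loc_lift: "openin X U \<Longrightarrow> x \<in> U \<Longrightarrow> u \<in> S3 U \<Longrightarrow>
   \<exists>W t. openin X W \<and> x \<in> W \<and> W \<subseteq> U \<and> t \<in> S2 W \<and> \<psi> W t = r3 U W u"
proof -
  assume a: "openin X U" "x \<in> U" "u \<in> S3 U"
  obtain V t where t: "t \<in> S2 V" "openin X V" "x \<in> V" "germ_eq X r3 x V (\<psi> V t) U u"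
    using ex_surj[OF a] by blast
  then obtain W where W: "openin X W" "x \<in> W" "W \<subseteq> V \<inter> U" "r3 V W (\<psi> V t) = r3 U W u"
    unfolding germ_eq_def by blast
  have "r2 V W t \<in> S2 W" using F2.res_in[OF t(2) W(1)] W(3) t(1) by blast
  moreover have "\<psi> W (r2 V W t) = r3 U W u" using Q.h_res[OF t(2) W(1) _ t(1)] W(3,4) by auto
  ultimately show ?thesis using W by blast
qed

end


context sex begin

definition lift where
  "lift U u Om t \<longleftrightarrow> openin X Om \<and> Om \<subseteq> U \<and> t \<in> S2 Om \<and> \<psi> Om t = r3 U Om u"

lemma lift_restr:
  assumes U: "openin X U" and u: "u \<in> S3 U" and l: "lift U u A t" and A1: "openin X A1" "A1 \<subseteq> A"
  shows "lift U u A1 (r2 A A1 t)"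
proof -
  have A: "openin X A" "A \<subseteq> U" "t \<in> S2 A" "\<psi> A t = r3 U A u" using l unfolding lift_def by blast+
  have "\<psi> A1 (r2 A A1 t) = r3 A A1 (\<psi> A t)" by (rule Q.h_res[OF A(1) A1 A(3)])
  also have "\<dots> = r3 U A1 u" using A(4) F3.res_trans[OF U A(1) A1(1) A1(2) A(2) u] by simp
  finally show ?thesis unfolding lift_def using A A1 F2.res_in[OF A(1) A1 A(3)] by blast
qed

lemma csD:
  assumes cs: "c_soft X S1 r1" and "compactly_in X V (topspace X)" "compactly_in X W (topspace X)"
    "compactly_in X V W" "s \<in> S1 U" "compactly_in X V U"
  shows "\<exists>t\<in>S1 W. \<exists>U''. compactly_in X V U'' \<and> U'' \<subseteq> U \<inter> W \<and> r1 U U'' s = r1 W U'' t"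
proof -
  have c: "compactly_in X V (topspace X) \<and> compactly_in X W (topspace X) \<and> compactly_in X V W"
    using assms by blast
  show ?thesis using cs[unfolded c_soft_def, rule_format, OF c, of s U] assms(5,6) by blast
qed

lemma ci_top: "compactly_in X V U \<Longrightarrow> compactly_in X V (topspace X)"
  using ci_mono_right[of X V U "topspace X"] ci_D[of X V U] openin_subset[of X U] by blast

lemma glue2:
  assumes cs1: "c_soft X S1 r1" and U: "openin X U" and u: "u \<in> S3 U"
    and lA: "lift U u A tA" and lB: "lift U u B tB"
    and KA: "compactly_in X KA A" and KB: "compactly_in X KB B"
  shows "\<exists>Om t. compactly_in X (KA \<union> KB) Om \<and> Om \<subseteq> A \<union> B \<and> lift U u Om t"
proof -
  have A: "openin X A" "A \<subseteq> U" "tA \<in> S2 A" "\<psi> A tA = r3 U A u" using lA unfolding lift_def by blast+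
  have B: "openin X B" "B \<subseteq> U" "tB \<in> S2 B" "\<psi> B tB = r3 U B u" using lB unfolding lift_def by blast+
  obtain A1 where A1: "compactly_in X A1 A" "compactly_in X KA A1" using lwc3[OF KA] by blast
  obtain B1 where B1: "compactly_in X B1 B" "compactly_in X KB B1" using lwc3[OF KB] by blast
  obtain B2 where B2: "compactly_in X B2 B" "compactly_in X B1 B2" using lwc3[OF B1(1)] by blast
  let ?T = "topspace X"
  have oA1: "openin X A1" "A1 \<subseteq> A" using ci_D[OF A1(1)] by blast+
  have oB1: "openin X B1" "B1 \<subseteq> B2" using ci_D[OF B2(2)] by blast+
  have oB2: "openin X B2" "B2 \<subseteq> B" using ci_D[OF B2(1)] by blast+
  have B2T: "B2 \<subseteq> ?T" using openin_subset[OF oB2(1)] .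
  have ciA1T: "compactly_in X A1 ?T" by (rule ci_top[OF A1(1)])
  have ciB1T: "compactly_in X B1 ?T" by (rule ci_top[OF B2(2)])
  have ciB2T: "compactly_in X B2 ?T" by (rule ci_top[OF B2(1)])
  let ?I = "A1 \<inter> B1"
  have ciIT: "compactly_in X ?I ?T" using lwc2[OF ciA1T ciB1T] by simp
  have ciIB2: "compactly_in X ?I B2" using lwc2[OF ciA1T B2(2)] B2T by (simp add: Int_absorb1)
  have ciIAB: "compactly_in X ?I (A \<inter> B)" using lwc2[OF A1(1) B1(1)] .
  have oAB: "openin X (A \<inter> B)" using A(1) B(1) by blast
  have oI: "openin X ?I" using oA1 oB1 by blast
  have IAB: "?I \<subseteq> A \<inter> B" using oA1 oB1 oB2 by blast
  have lA': "lift U u (A \<inter> B) (r2 A (A \<inter> B) tA)" by (rule lift_restr[OF U u lA oAB]) blast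
  have lB': "lift U u (A \<inter> B) (r2 B (A \<inter> B) tB)" by (rule lift_restr[OF U u lB oAB]) blast
  define dd where "dd = r2 A (A \<inter> B) tA - r2 B (A \<inter> B) tB"
  have ddS: "dd \<in> S2 (A \<inter> B)" unfolding dd_def using lA' lB' F2.diff_in[OF oAB] unfolding lift_def by blast
  have "\<psi> (A \<inter> B) dd = 0" unfolding dd_def using Q.h_diff[OF oAB] lA' lB' unfolding lift_def by auto
  then obtain d1 where d1: "d1 \<in> S1 (A \<inter> B)" "\<phi> (A \<inter> B) d1 = dd" using ker[OF oAB ddS] by blast
  obtain e U'' where e: "e \<in> S1 B2" "compactly_in X ?I U''" "U'' \<subseteq> (A \<inter> B) \<inter> B2"
      "r1 (A \<inter> B) U'' d1 = r1 B2 U'' e"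
    using csD[OF cs1 ciIT ciB2T ciIB2 d1(1) ciIAB] by blast
  have oU'': "openin X U''" "?I \<subseteq> U''" using ci_D[OF e(2)] by blast+
  have key: "r1 B2 ?I e = r1 (A \<inter> B) ?I d1"
  proof -
    have "r1 B2 ?I e = r1 U'' ?I (r1 B2 U'' e)"
      using F1.res_trans[OF oB2(1) oU''(1) oI oU''(2) _ e(1)] e(3) by auto
    also have "\<dots> = r1 U'' ?I (r1 (A \<inter> B) U'' d1)" using e(4) by simp
    also have "\<dots> = r1 (A \<inter> B) ?I d1"
      using F1.res_trans[OF oAB oU''(1) oI oU''(2) _ d1(1)] e(3) by auto
    finally show ?thesis .
  qed
  define a where "a = r2 A A1 tA"
  define eB where "eB = r1 B2 B1 e"
  define b where "b = r2 B B1 tB + \<phi> B1 eB"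
  have la: "lift U u A1 a" unfolding a_def by (rule lift_restr[OF U u lA oA1])
  have oB1B: "B1 \<subseteq> B" using oB1 oB2 by blast
  have lb1: "lift U u B1 (r2 B B1 tB)" by (rule lift_restr[OF U u lB oB1(1) oB1B])
  have eBS: "eB \<in> S1 B1" unfolding eB_def using F1.res_in[OF oB2(1) oB1(1) oB1(2) e(1)] .
  have lb: "lift U u B1 b"
  proof -
    have r: "r2 B B1 tB \<in> S2 B1" "\<psi> B1 (r2 B B1 tB) = r3 U B1 u" using lb1 unfolding lift_def by blast+
    have "\<psi> B1 b = \<psi> B1 (r2 B B1 tB) + \<psi> B1 (\<phi> B1 eB)"
      unfolding b_def by (rule Q.h_add[OF oB1(1) r(1) P.h_in[OF oB1(1) eBS]])
    also have "\<dots> = r3 U B1 u" using r(2) psiphi[OF oB1(1) eBS] by simp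
    finally show ?thesis unfolding lift_def b_def
      using oB1(1) oB1B B(2) F2.add_in[OF oB1(1) r(1) P.h_in[OF oB1(1) eBS]] by blast
  qed
  have IA1: "?I \<subseteq> A1" and IB1: "?I \<subseteq> B1" by blast+
  have compat: "r2 A1 ?I a = r2 B1 ?I b"
  proof -
    have tA_I: "r2 A1 ?I a = r2 A ?I tA"
      unfolding a_def using F2.res_trans[OF A(1) oA1(1) oI IA1 oA1(2) A(3)] .
    have phiI: "r2 B1 ?I (\<phi> B1 eB) = \<phi> ?I (r1 (A \<inter> B) ?I d1)"
    proof -
      have "r2 B1 ?I (\<phi> B1 eB) = \<phi> ?I (r1 B1 ?I eB)"
        using P.h_res[OF oB1(1) oI IB1 eBS] by simp
      also have "r1 B1 ?I eB = r1 B2 ?I e"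
        unfolding eB_def using F1.res_trans[OF oB2(1) oB1(1) oI IB1 oB1(2) e(1)] .
      finally show ?thesis using key by simp
    qed
    have "\<phi> ?I (r1 (A \<inter> B) ?I d1) = r2 (A \<inter> B) ?I dd"
      using P.h_res[OF oAB oI IAB d1(1)] d1(2) by simp
    also have "\<dots> = r2 A ?I tA - r2 B ?I tB"
    proof -
      have "r2 (A \<inter> B) ?I dd = r2 (A \<inter> B) ?I (r2 A (A \<inter> B) tA) - r2 (A \<inter> B) ?I (r2 B (A \<inter> B) tB)"
        unfolding dd_def using F2.res_diff[OF oAB oI IAB] lA' lB' unfolding lift_def by blast
      also have "\<dots> = r2 A ?I tA - r2 B ?I tB"
        using F2.res_trans[OF A(1) oAB oI IAB _ A(3)] F2.res_trans[OF B(1) oAB oI IAB _ B(3)] by auto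
      finally show ?thesis .
    qed
    finally have phiI2: "r2 B1 ?I (\<phi> B1 eB) = r2 A ?I tA - r2 B ?I tB" using phiI by simp
    have "r2 B1 ?I b = r2 B1 ?I (r2 B B1 tB) + r2 B1 ?I (\<phi> B1 eB)"
      unfolding b_def using F2.res_add[OF oB1(1) oI IB1] lb1 P.h_in[OF oB1(1) eBS] unfolding lift_def by blast
    also have "\<dots> = r2 B ?I tB + (r2 A ?I tA - r2 B ?I tB)"
      using F2.res_trans[OF B(1) oB1(1) oI IB1 oB1B B(3)] phiI2 by simp
    also have "\<dots> = r2 A ?I tA" by simp
    finally show ?thesis using tA_I by simp
  qed
  define Om where "Om = A1 \<union> B1"
  have oO: "openin X Om" unfolding Om_def using oA1 oB1 by blast
  define f where "f W = (if W = A1 then a else b)" for W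
  have fl: "lift U u W (f W)" if "W \<in> {A1, B1}" for W
    using that la lb unfolding f_def by auto
  have cov: "\<Union>{A1, B1} = Om" unfolding Om_def by simp
  have covo: "openin X W \<and> W \<subseteq> Om" if "W \<in> {A1, B1}" for W
    using that oA1 oB1 unfolding Om_def by auto
  obtain t where t: "t \<in> S2 Om" "\<forall>W\<in>{A1, B1}. r2 Om W t = f W"
  proof (rule F2.glue[OF oO, of "{A1, B1}" f, THEN bexE])
    show "openin X W \<and> W \<subseteq> Om" if "W \<in> {A1, B1}" for W by (rule covo[OF that])
    show "\<Union>{A1, B1} = Om" by (rule cov)
    show "f W \<in> S2 W" if "W \<in> {A1, B1}" for W using fl[OF that] unfolding lift_def by blast
    show "r2 W1 (W1 \<inter> W2) (f W1) = r2 W2 (W1 \<inter> W2) (f W2)" if "W1 \<in> {A1, B1}" "W2 \<in> {A1, B1}" for W1 W2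
    proof (cases "W1 = W2")
      case False
      then have "(W1 = A1 \<and> W2 = B1 \<and> A1 \<noteq> B1) \<or> (W1 = B1 \<and> W2 = A1 \<and> A1 \<noteq> B1)" using that by auto
      then show ?thesis
      proof
        assume "W1 = A1 \<and> W2 = B1 \<and> A1 \<noteq> B1" then show ?thesis using compat unfolding f_def by auto
      next
        assume "W1 = B1 \<and> W2 = A1 \<and> A1 \<noteq> B1" then show ?thesis using compat unfolding f_def
          by (auto simp: Int_commute)
      qed
    qed simp
  qed blast
  have "\<psi> Om t = r3 U Om u"
  proof (rule F3.sep[OF oO, of "{A1, B1}"])
    show "openin X W \<and> W \<subseteq> Om" if "W \<in> {A1, B1}" for W by (rule covo[OF that])
    show "\<Union>{A1, B1} = Om" by (rule cov)
    show "\<psi> Om t \<in> S3 Om" by (rule Q.h_in[OF oO t(1)])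
    have OU: "Om \<subseteq> U" unfolding Om_def using oA1 oB1B A(2) B(2) by blast
    show "r3 U Om u \<in> S3 Om" by (rule F3.res_in[OF U oO OU u])
    show "r3 Om W (\<psi> Om t) = r3 Om W (r3 U Om u)" if "W \<in> {A1, B1}" for W
    proof -
      have W: "openin X W" "W \<subseteq> Om" using covo[OF that] by blast+
      have "r3 Om W (\<psi> Om t) = \<psi> W (r2 Om W t)" using Q.h_res[OF oO W t(1)] by simp
      also have "\<dots> = \<psi> W (f W)" using t(2) that by metis
      also have "\<dots> = r3 U W u" using fl[OF that] unfolding lift_def by blast
      also have "\<dots> = r3 Om W (r3 U Om u)" using F3.res_trans[OF U oO W(1) W(2) OU u] by simp
      finally show ?thesis .
    qed
  qed
  moreover have OU: "Om \<subseteq> U" unfolding Om_def using oA1 oB1B A(2) B(2) by blast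
  ultimately have lO: "lift U u Om t" unfolding lift_def using oO t(1) by blast
  have "compactly_in X KA Om" using ci_mono_right[OF A1(2) _ oO] unfolding Om_def by blast
  moreover have "compactly_in X KB Om" using ci_mono_right[OF B1(2) _ oO] unfolding Om_def by blast
  ultimately have "compactly_in X (KA \<union> KB) Om" by (rule ci_Un)
  moreover have "Om \<subseteq> A \<union> B" unfolding Om_def using oA1 oB1B by blast
  ultimately show ?thesis using lO by blast
qed

end


context sex begin

lemma S3_empty: "openin X U \<Longrightarrow> u \<in> S3 U \<Longrightarrow> r3 U {} u = 0"
proof -
  assume U: "openin X U" and u: "u \<in> S3 U"
  have oe: "openin X {}" by simp
  show ?thesis
  proof (rule F3.sep[OF oe, of "{}"])
    show "r3 U {} u \<in> S3 {}" using F3.res_in[OF U oe _ u] by simp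
    show "0 \<in> S3 {}" by (rule F3.zero_in[OF oe])
  qed auto
qed

lemma fin_lift:
  assumes cs1: "c_soft X S1 r1" and U: "openin X U" and u: "u \<in> S3 U"
    and fin: "finite \<A>" and all: "\<forall>A\<in>\<A>. \<exists>t. lift U u A t"
  shows "\<forall>K. compactly_in X K (\<Union>\<A>) \<longrightarrow> (\<exists>Om t. compactly_in X K Om \<and> Om \<subseteq> \<Union>\<A> \<and> lift U u Om t)"
  using fin all
proof (induction \<A> rule: finite_induct)
  case empty
  show ?case
  proof (intro allI impI)
    fix K assume "compactly_in X K (\<Union>{})"
    then have K: "K = {}" using ci_D[of X K "{}"] by simp
    have "lift U u {} 0" unfolding lift_def
      using F2.zero_in[of "{}"] Q.h_zero[of "{}"] S3_empty[OF U u] by simp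
    moreover have "compactly_in X K {}" unfolding K by (rule ci_empty) simp
    ultimately show "\<exists>Om t. compactly_in X K Om \<and> Om \<subseteq> \<Union>{} \<and> lift U u Om t" by blast
  qed
next
  case (insert A \<A>)
  show ?case
  proof (intro allI impI)
    fix K assume K: "compactly_in X K (\<Union>(insert A \<A>))"
    obtain tA where tA: "lift U u A tA" using insert.prems by blast
    have oA: "openin X A" using tA unfolding lift_def by blast
    have oA': "openin X (\<Union>\<A>)"
    proof (rule openin_Union)
      show "\<And>S. S \<in> \<A> \<Longrightarrow> openin X S" using insert.prems unfolding lift_def by blast
    qed
    have K': "compactly_in X K (A \<union> \<Union>\<A>)" using K by simp
    obtain KA KB where KAB: "compactly_in X KA A" "compactly_in X KB (\<Union>\<A>)" "K \<subseteq> KA \<union> KB"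
      using shrink[OF K' oA oA'] by blast
    have IH: "\<forall>K. compactly_in X K (\<Union>\<A>) \<longrightarrow> (\<exists>Om t. compactly_in X K Om \<and> Om \<subseteq> \<Union>\<A> \<and> lift U u Om t)"
      using insert.IH insert.prems by blast
    obtain OB tB where OB: "compactly_in X KB OB" "OB \<subseteq> \<Union>\<A>" "lift U u OB tB"
      using IH KAB(2) by blast
    obtain Om t where Om: "compactly_in X (KA \<union> KB) Om" "Om \<subseteq> A \<union> OB" "lift U u Om t"
      using glue2[OF cs1 U u tA OB(3) KAB(1) OB(1)] by blast
    have oK: "openin X K" using ci_D[OF K] by blast
    have "compactly_in X K Om" using ci_mono_left[OF Om(1) KAB(3) oK] .
    moreover have "Om \<subseteq> \<Union>(insert A \<A>)" using Om(2) OB(2) by auto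
    ultimately show "\<exists>Om t. compactly_in X K Om \<and> Om \<subseteq> \<Union>(insert A \<A>) \<and> lift U u Om t"
      using Om(3) by blast
  qed
qed

lemma core:
  assumes cs1: "c_soft X S1 r1" and U: "openin X U" and u: "u \<in> S3 U" and V: "compactly_in X V U"
  shows "\<exists>Om t. compactly_in X V Om \<and> Om \<subseteq> U \<and> lift U u Om t"
proof -
  obtain V' where V': "compactly_in X V' U" "compactly_in X V V'" using lwc3[OF V] by blast
  let ?C = "{W. \<exists>t. lift U u W t}"
  have cc: "(\<forall>W\<in>?C. openin X W \<and> W \<subseteq> U) \<and> \<Union>?C = U"
  proof (rule conjI)
    show "\<forall>W\<in>?C. openin X W \<and> W \<subseteq> U" unfolding lift_def by blast
  next
    show "\<Union>?C = U"
    proof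
      show "\<Union>?C \<subseteq> U" unfolding lift_def by blast
      show "U \<subseteq> \<Union>?C"
      proof
        fix x assume x: "x \<in> U"
        obtain W t where "openin X W" "x \<in> W" "W \<subseteq> U" "t \<in> S2 W" "\<psi> W t = r3 U W u"
          using loc_lift[OF U x u] by blast
        then have "W \<in> ?C" "x \<in> W" unfolding lift_def by blast+
        then show "x \<in> \<Union>?C" by blast
      qed
    qed
  qed
  obtain J where J: "finite J" "J \<subseteq> ?C" "V' \<subseteq> \<Union>J" using ci_cover2[OF V'(1) cc] by blast
  have oJ: "openin X (\<Union>J)"
  proof (rule openin_Union)
    show "\<And>S. S \<in> J \<Longrightarrow> openin X S" using J(2) unfolding lift_def by blast
  qed
  have VJ: "compactly_in X V (\<Union>J)" by (rule ci_mono_right[OF V'(2) J(3) oJ])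
  have allJ: "\<forall>A\<in>J. \<exists>t. lift U u A t" using J(2) by blast
  obtain Om t where "compactly_in X V Om" "Om \<subseteq> \<Union>J" "lift U u Om t"
    using fin_lift[OF cs1 U u J(1) allJ] VJ by blast
  moreover have "\<Union>J \<subseteq> U" using J(2) unfolding lift_def by blast
  ultimately show ?thesis by blast
qed

lemma part2:
  assumes cs1: "c_soft X S1 r1" and cs2: "c_soft X S2 r2"
  shows "c_soft X S3 r3"
  unfolding c_soft_def
proof (intro allI impI ballI)
  fix V W U u
  assume h: "compactly_in X V (topspace X) \<and> compactly_in X W (topspace X) \<and> compactly_in X V W"
    and u: "u \<in> S3 U" and VU: "compactly_in X V U"
  have U: "openin X U" using ci_D[OF VU] by blast
  have oW: "openin X W" using h ci_D by blast
  obtain Om t where Om: "compactly_in X V Om" "Om \<subseteq> U" "lift U u Om t" using core[OF cs1 U u VU] by blast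
  have l: "openin X Om" "t \<in> S2 Om" "\<psi> Om t = r3 U Om u" using Om(3) unfolding lift_def by blast+
  have c: "compactly_in X V (topspace X) \<and> compactly_in X W (topspace X) \<and> compactly_in X V W" using h by blast
  obtain t' U'' where t': "t' \<in> S2 W" "compactly_in X V U''" "U'' \<subseteq> Om \<inter> W" "r2 Om U'' t = r2 W U'' t'"
    using cs2[unfolded c_soft_def, rule_format, OF c, of t Om] l(2) Om(1) by blast
  have oU'': "openin X U''" using ci_D[OF t'(2)] by blast
  have "r3 U U'' u = r3 Om U'' (r3 U Om u)" using F3.res_trans[OF U l(1) oU'' _ Om(2) u] t'(3) by auto
  also have "\<dots> = \<psi> U'' (r2 Om U'' t)" using Q.h_res[OF l(1) oU'' _ l(2)] t'(3) l(3) by auto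
  also have "\<dots> = \<psi> U'' (r2 W U'' t')" using t'(4) by simp
  also have "\<dots> = r3 W U'' (\<psi> W t')" using Q.h_res[OF oW oU'' _ t'(1)] t'(3) by auto
  finally have "r3 U U'' u = r3 W U'' (\<psi> W t')" .
  moreover have "\<psi> W t' \<in> S3 W" by (rule Q.h_in[OF oW t'(1)])
  moreover have "U'' \<subseteq> U \<inter> W" using t'(3) Om(2) by blast
  ultimately show "\<exists>t\<in>S3 W. \<exists>U''. compactly_in X V U'' \<and> U'' \<subseteq> U \<inter> W \<and> r3 U U'' u = r3 W U'' t"
    using t'(2) by blast
qed

end


context lwc begin

lemma exhaust:
  assumes cover: "\<exists>Uc :: nat \<Rightarrow> 'a set. (\<forall>n. compactly_in X (Uc n) (topspace X)) \<and> (\<Union>n. Uc n) = topspace X"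
  shows "\<exists>Wx :: nat \<Rightarrow> 'a set. (\<forall>n. compactly_in X (Wx n) (topspace X)) \<and>
           (\<forall>n. compactly_in X (Wx n) (Wx (Suc n))) \<and> (\<Union>n. Wx n) = topspace X"
proof -
  obtain Uc :: "nat \<Rightarrow> 'a set" where Uc: "\<forall>n. compactly_in X (Uc n) (topspace X)" "(\<Union>n. Uc n) = topspace X"
    using cover by blast
  let ?T = "topspace X"
  have oT: "openin X ?T" by simp
  define nx where "nx A n = (SOME W'. compactly_in X (A \<union> Uc n) W' \<and> compactly_in X W' ?T)" for A n
  define Wx where "Wx = rec_nat {} (\<lambda>n A. nx A n)"
  have W0: "Wx 0 = {}" unfolding Wx_def by simp
  have WS: "Wx (Suc n) = nx (Wx n) n" for n unfolding Wx_def by simp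
  have nxp: "compactly_in X (A \<union> Uc n) (nx A n) \<and> compactly_in X (nx A n) ?T"
    if "compactly_in X A ?T" for A n
  proof -
    have "compactly_in X (A \<union> Uc n) ?T" using ci_Un[OF that] Uc(1) by blast
    then have "\<exists>W'. compactly_in X (A \<union> Uc n) W' \<and> compactly_in X W' ?T" using lwc3 by blast
    from someI_ex[OF this] show ?thesis unfolding nx_def .
  qed
  have ciT: "compactly_in X (Wx n) ?T" for n
  proof (induction n)
    case 0 show ?case unfolding W0 by (rule ci_empty[OF oT])
  next
    case (Suc n) show ?case unfolding WS using nxp[OF Suc] by blast
  qed
  have st: "compactly_in X (Wx n \<union> Uc n) (Wx (Suc n))" for n
    unfolding WS using nxp[OF ciT] by blast
  have s1: "compactly_in X (Wx n) (Wx (Suc n))" for n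
    by (rule ci_mono_left[OF st]) (use ciT ci_D in blast)+
  have s2: "Uc n \<subseteq> Wx (Suc n)" for n using ci_D[OF st[of n]] by blast
  have "(\<Union>n. Wx n) = ?T"
  proof
    show "(\<Union>n. Wx n) \<subseteq> ?T" using ciT ci_D openin_subset by blast
    show "?T \<subseteq> (\<Union>n. Wx n)" using Uc(2) s2 by blast
  qed
  then show ?thesis using ciT s1 by blast
qed

end

context sex begin

lemma surj_step:
  assumes cs1: "c_soft X S1 r1" and u: "u \<in> S3 (topspace X)"
    and c01: "compactly_in X W0 W1" and c12: "compactly_in X W1 W2"
    and T0: "compactly_in X W0 (topspace X)" and T2: "compactly_in X W2 (topspace X)"
    and r: "lift (topspace X) u W1 r"
  shows "\<exists>r'. lift (topspace X) u W2 r' \<and> r2 W2 W0 r' = r2 W1 W0 r"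
proof -
  let ?T = "topspace X"
  have oT: "openin X ?T" by simp
  have o0: "openin X W0" "W0 \<subseteq> W1" using ci_D[OF c01] by blast+
  have o1: "openin X W1" "W1 \<subseteq> W2" using ci_D[OF c12] by blast+
  have o2: "openin X W2" using ci_D[OF c12] by blast
  have W02: "W0 \<subseteq> W2" using o0 o1 by blast
  obtain Om tq where q: "compactly_in X W2 Om" "Om \<subseteq> ?T" "lift ?T u Om tq" using core[OF cs1 oT u T2] by blast
  define q where "q = r2 Om W2 tq"
  have lq: "lift ?T u W2 q" unfolding q_def by (rule lift_restr[OF oT u q(3) o2]) (use ci_D[OF q(1)] in blast)
  have lq1: "lift ?T u W1 (r2 W2 W1 q)" by (rule lift_restr[OF oT u lq o1])
  have rr: "r \<in> S2 W1" "\<psi> W1 r = r3 ?T W1 u" using r unfolding lift_def by blast+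
  have qq: "q \<in> S2 W2" "\<psi> W2 q = r3 ?T W2 u" using lq unfolding lift_def by blast+
  have qq1: "r2 W2 W1 q \<in> S2 W1" "\<psi> W1 (r2 W2 W1 q) = r3 ?T W1 u" using lq1 unfolding lift_def by blast+
  define d where "d = r - r2 W2 W1 q"
  have dS: "d \<in> S2 W1" unfolding d_def by (rule F2.diff_in[OF o1(1) rr(1) qq1(1)])
  have "\<psi> W1 d = 0" unfolding d_def using Q.h_diff[OF o1(1) rr(1) qq1(1)] rr(2) qq1(2) by simp
  then obtain d1 where d1: "d1 \<in> S1 W1" "\<phi> W1 d1 = d" using ker[OF o1(1) dS] by blast
  have c02: "compactly_in X W0 W2" by (rule ci_mono_right[OF c01 o1(2) o2])
  obtain e U'' where e: "e \<in> S1 W2" "compactly_in X W0 U''" "U'' \<subseteq> W1 \<inter> W2" "r1 W1 U'' d1 = r1 W2 U'' e"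
    using csD[OF cs1 T0 T2 c02 d1(1) c01] by blast
  have oU: "openin X U''" "W0 \<subseteq> U''" using ci_D[OF e(2)] by blast+
  define r' where "r' = q + \<phi> W2 e"
  have pe: "\<phi> W2 e \<in> S2 W2" by (rule P.h_in[OF o2 e(1)])
  have lr': "lift ?T u W2 r'"
  proof -
    have "\<psi> W2 r' = \<psi> W2 q + \<psi> W2 (\<phi> W2 e)" unfolding r'_def by (rule Q.h_add[OF o2 qq(1) pe])
    also have "\<dots> = r3 ?T W2 u" using qq(2) psiphi[OF o2 e(1)] by simp
    finally show ?thesis unfolding lift_def r'_def using o2 openin_subset[OF o2] F2.add_in[OF o2 qq(1) pe] by blast
  qed
  have ke: "r1 W2 W0 e = r1 W1 W0 d1"
  proof -
    have "r1 W2 W0 e = r1 U'' W0 (r1 W2 U'' e)" using F1.res_trans[OF o2 oU(1) o0(1) oU(2) _ e(1)] e(3) by auto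
    also have "\<dots> = r1 U'' W0 (r1 W1 U'' d1)" using e(4) by simp
    also have "\<dots> = r1 W1 W0 d1" using F1.res_trans[OF o1(1) oU(1) o0(1) oU(2) _ d1(1)] e(3) by auto
    finally show ?thesis .
  qed
  have "r2 W2 W0 r' = r2 W2 W0 q + r2 W2 W0 (\<phi> W2 e)" unfolding r'_def by (rule F2.res_add[OF o2 o0(1) W02 qq(1) pe])
  also have "r2 W2 W0 (\<phi> W2 e) = \<phi> W0 (r1 W1 W0 d1)" using P.h_res[OF o2 o0(1) W02 e(1)] ke by simp
  also have "\<phi> W0 (r1 W1 W0 d1) = r2 W1 W0 d" using P.h_res[OF o1(1) o0(1) o0(2) d1(1)] d1(2) by simp
  also have "r2 W1 W0 d = r2 W1 W0 r - r2 W2 W0 q"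
    unfolding d_def using F2.res_diff[OF o1(1) o0(1) o0(2) rr(1) qq1(1)] F2.res_trans[OF o2 o1(1) o0(1) o0(2) o1(2) qq(1)] by simp
  finally have "r2 W2 W0 r' = r2 W1 W0 r" by simp
  then show ?thesis using lr' by blast
qed

end


context sex begin

lemma surj:
  assumes cs1: "c_soft X S1 r1" and u: "u \<in> S3 (topspace X)"
    and cover: "\<exists>Uc :: nat \<Rightarrow> 'a set. (\<forall>n. compactly_in X (Uc n) (topspace X)) \<and> (\<Union>n. Uc n) = topspace X"
  shows "\<exists>s\<in>S2 (topspace X). \<psi> (topspace X) s = u"
proof -
  let ?T = "topspace X"
  have oT: "openin X ?T" by simp
  obtain Wx :: "nat \<Rightarrow> 'a set" where Wx: "\<forall>n. compactly_in X (Wx n) ?T"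
    "\<forall>n. compactly_in X (Wx n) (Wx (Suc n))" "(\<Union>n. Wx n) = ?T"
    using exhaust[OF cover] by blast
  have oW: "openin X (Wx n)" for n using Wx(1) ci_D by blast
  have WsubS: "Wx n \<subseteq> Wx (Suc n)" for n using Wx(2) ci_D by blast
  have mono: "Wx m \<subseteq> Wx n" if "m \<le> n" for m n
    using lift_Suc_mono_le[of Wx, OF WsubS that] .
  have WT: "Wx n \<subseteq> ?T" for n using Wx(3) by blast
  have init: "\<exists>r. lift ?T u (Wx 1) r"
  proof -
    obtain Om t where "compactly_in X (Wx 1) Om" "Om \<subseteq> ?T" "lift ?T u Om t"
      using core[OF cs1 oT u] Wx(1) by blast
    then show ?thesis using lift_restr[OF oT u, of Om t "Wx 1"] oW ci_D by blast
  qed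
  define nxt where "nxt n r = (SOME r'. lift ?T u (Wx (Suc (Suc n))) r' \<and>
       r2 (Wx (Suc (Suc n))) (Wx n) r' = r2 (Wx (Suc n)) (Wx n) r)" for n r
  define R where "R = rec_nat (SOME r. lift ?T u (Wx 1) r) nxt"
  have R0: "R 0 = (SOME r. lift ?T u (Wx 1) r)" unfolding R_def by simp
  have RS: "R (Suc n) = nxt n (R n)" for n unfolding R_def by simp
  have nxtp: "lift ?T u (Wx (Suc (Suc n))) (nxt n r) \<and>
       r2 (Wx (Suc (Suc n))) (Wx n) (nxt n r) = r2 (Wx (Suc n)) (Wx n) r"
    if "lift ?T u (Wx (Suc n)) r" for n r
  proof -
    have "\<exists>r'. lift ?T u (Wx (Suc (Suc n))) r' \<and> r2 (Wx (Suc (Suc n))) (Wx n) r' = r2 (Wx (Suc n)) (Wx n) r"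
      by (rule surj_step[OF cs1 u]) (use Wx that in blast)+
    from someI_ex[OF this] show ?thesis unfolding nxt_def .
  qed
  have Rl: "lift ?T u (Wx (Suc n)) (R n)" for n
  proof (induction n)
    case 0 show ?case unfolding R0 using someI_ex[OF init] by simp
  next
    case (Suc n) show ?case unfolding RS using nxtp[OF Suc] by blast
  qed
  have Rc: "r2 (Wx (Suc (Suc n))) (Wx n) (R (Suc n)) = r2 (Wx (Suc n)) (Wx n) (R n)" for n
    unfolding RS using nxtp[OF Rl] by blast
  define g where "g n = r2 (Wx (Suc n)) (Wx n) (R n)" for n
  have gl: "lift ?T u (Wx n) (g n)" for n unfolding g_def by (rule lift_restr[OF oT u Rl oW WsubS])
  have gS: "g n \<in> S2 (Wx n)" for n using gl unfolding lift_def by blast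
  have gstep: "r2 (Wx (Suc k)) (Wx k) (g (Suc k)) = g k" for k
  proof -
    have RlS: "R (Suc k) \<in> S2 (Wx (Suc (Suc k)))" using Rl unfolding lift_def by blast
    have "r2 (Wx (Suc k)) (Wx k) (g (Suc k)) = r2 (Wx (Suc (Suc k))) (Wx k) (R (Suc k))"
      unfolding g_def using F2.res_trans[OF oW oW oW WsubS WsubS RlS] .
    also have "\<dots> = g k" unfolding g_def by (rule Rc)
    finally show ?thesis .
  qed
  have gres: "m \<le> n \<Longrightarrow> r2 (Wx n) (Wx m) (g n) = g m" for m n
  proof (induction n)
    case 0 then show ?case using F2.res_id[OF oW gS] by simp
  next
    case (Suc k)
    show ?case
    proof (cases "m = Suc k")
      case True then show ?thesis using F2.res_id[OF oW gS] by simp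
    next
      case False
      then have mk: "m \<le> k" using Suc.prems by simp
      have "r2 (Wx (Suc k)) (Wx m) (g (Suc k)) = r2 (Wx k) (Wx m) (r2 (Wx (Suc k)) (Wx k) (g (Suc k)))"
        using F2.res_trans[OF oW oW oW mono[OF mk] WsubS gS] by simp
      also have "\<dots> = g m" using gstep Suc.IH[OF mk] by simp
      finally show ?thesis .
    qed
  qed
  define f where "f A = g (LEAST n. Wx n = A)" for A
  have fW: "f (Wx n) = g n" for n
  proof -
    define n0 where "n0 = (LEAST k. Wx k = Wx n)"
    have n0: "Wx n0 = Wx n" "n0 \<le> n" unfolding n0_def
      by (rule LeastI[of "\<lambda>k. Wx k = Wx n" n], simp) (rule Least_le, simp)
    have "g n0 = r2 (Wx n) (Wx n0) (g n)" using gres[OF n0(2)] by simp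
    also have "\<dots> = g n" using n0(1) F2.res_id[OF oW gS] by simp
    finally show ?thesis unfolding f_def n0_def[symmetric] by simp
  qed
  have rngo: "openin X A \<and> A \<subseteq> ?T" if "A \<in> range Wx" for A using that oW WT by blast
  have rngc: "\<Union>(range Wx) = ?T" using Wx(3) by simp
  obtain s where s: "s \<in> S2 ?T" "\<forall>A\<in>range Wx. r2 ?T A s = f A"
  proof (rule F2.glue[OF oT, of "range Wx" f, THEN bexE])
    show "openin X A \<and> A \<subseteq> ?T" if "A \<in> range Wx" for A by (rule rngo[OF that])
    show "\<Union>(range Wx) = ?T" by (rule rngc)
    show "f A \<in> S2 A" if "A \<in> range Wx" for A using that fW gS by auto
    show "r2 W1 (W1 \<inter> W2) (f W1) = r2 W2 (W1 \<inter> W2) (f W2)" if hw: "W1 \<in> range Wx" "W2 \<in> range Wx" for W1 W2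
    proof -
      obtain i j where ij: "W1 = Wx i" "W2 = Wx j" using hw by blast
      have gen: "r2 (Wx i) (Wx i \<inter> Wx j) (g i) = r2 (Wx j) (Wx i \<inter> Wx j) (g j)" if "i \<le> j" for i j
      proof -
        have "Wx i \<inter> Wx j = Wx i" using mono[OF that] by blast
        then show ?thesis using gres[OF that] F2.res_id[OF oW gS] by simp
      qed
      show ?thesis unfolding ij fW
        using gen[of i j] gen[of j i] by (cases "i \<le> j") (auto simp: Int_commute)
    qed
  qed blast
  have "\<psi> ?T s = u"
  proof (rule F3.sep[OF oT, of "range Wx"])
    show "openin X A \<and> A \<subseteq> ?T" if "A \<in> range Wx" for A by (rule rngo[OF that])
    show "\<Union>(range Wx) = ?T" by (rule rngc)
    show "\<psi> ?T s \<in> S3 ?T" by (rule Q.h_in[OF oT s(1)])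
    show "u \<in> S3 ?T" by (rule u)
    show "r3 ?T A (\<psi> ?T s) = r3 ?T A u" if hA: "A \<in> range Wx" for A
    proof -
      obtain n where n: "A = Wx n" using hA by blast
      have "r3 ?T A (\<psi> ?T s) = \<psi> A (r2 ?T A s)" using Q.h_res[OF oT _ _ s(1)] rngo[OF hA] by simp
      also have "\<dots> = \<psi> (Wx n) (g n)" using s(2) hA fW n by simp
      also have "\<dots> = r3 ?T A u" using gl[of n] n unfolding lift_def by simp
      finally show ?thesis .
    qed
  qed
  then show ?thesis using s(1) by blast
qed

lemma part3:
  assumes cs1: "c_soft X S1 r1"
    and cover: "\<exists>Uc :: nat \<Rightarrow> 'a set. (\<forall>n. compactly_in X (Uc n) (topspace X)) \<and> (\<Union>n. Uc n) = topspace X"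
  shows "global_sections_exact X S1 S2 S3 \<phi> \<psi>"
proof -
  let ?T = "topspace X"
  have oT: "openin X ?T" by simp
  have a: "inj_on (\<phi> ?T) (S1 ?T)" unfolding inj_on_def using phi_inj[OF oT] by blast
  have b: "\<phi> ?T ` S1 ?T = {t \<in> S2 ?T. \<psi> ?T t = 0}"
  proof
    show "\<phi> ?T ` S1 ?T \<subseteq> {t \<in> S2 ?T. \<psi> ?T t = 0}" using P.h_in[OF oT] psiphi[OF oT] by blast
    show "{t \<in> S2 ?T. \<psi> ?T t = 0} \<subseteq> \<phi> ?T ` S1 ?T"
    proof
      fix t assume "t \<in> {t \<in> S2 ?T. \<psi> ?T t = 0}"
      then obtain s where "s \<in> S1 ?T" "\<phi> ?T s = t" using ker[OF oT] by blast
      then show "t \<in> \<phi> ?T ` S1 ?T" by blast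
    qed
  qed
  have c: "\<psi> ?T ` S2 ?T = S3 ?T"
  proof
    show "\<psi> ?T ` S2 ?T \<subseteq> S3 ?T" using Q.h_in[OF oT] by blast
    show "S3 ?T \<subseteq> \<psi> ?T ` S2 ?T"
    proof
      fix u assume "u \<in> S3 ?T"
      then obtain s where "s \<in> S2 ?T" "\<psi> ?T s = u" using surj[OF cs1 _ cover] by blast
      then show "u \<in> \<psi> ?T ` S2 ?T" by blast
    qed
  qed
  show ?thesis unfolding global_sections_exact_def Let_def using a b c by blast
qed

end

lemma sex_intro:
  assumes lw: "locally_weakly_quasi_compact X"
    and se: "short_exact X sc1 S1 r1 sc2 S2 r2 sc3 S3 r3 \<phi> \<psi>"
  shows "sex X sc1 S1 r1 sc2 S2 r2 sc3 S3 r3 \<phi> \<psi>"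
proof -
  have h1: "sheaf_hom X sc1 S1 r1 sc2 S2 r2 \<phi>" using se[unfolded short_exact_def, THEN conjunct1] .
  have h2: "sheaf_hom X sc2 S2 r2 sc3 S3 r3 \<psi>" using se[unfolded short_exact_def, THEN conjunct2, THEN conjunct1] .
  have s1: "is_sheaf X sc1 S1 r1" using h1[unfolded sheaf_hom_def, THEN conjunct1] .
  have s2: "is_sheaf X sc2 S2 r2" using h1[unfolded sheaf_hom_def, THEN conjunct2, THEN conjunct1] .
  have s3: "is_sheaf X sc3 S3 r3" using h2[unfolded sheaf_hom_def, THEN conjunct2, THEN conjunct1] .
  show ?thesis
    by (intro sex.intro lwc.intro shf.intro shom.intro shom_axioms.intro sex_axioms.intro lw se h1 h2 s1 s2 s3)
qed

theorem mainTheorem20: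
  fixes X :: "'a topology"
  assumes lwqc: "locally_weakly_quasi_compact X"
    and cover: "\<exists>Uc :: nat \<Rightarrow> 'a set. (\<forall>n. compactly_in X (Uc n) (topspace X)) \<and>
                   (\<Union>n. Uc n) = topspace X"
  shows
    "(\<forall>(sc :: 'k::field \<Rightarrow> 'v::ab_group_add \<Rightarrow> 'v) S res. is_sheaf X sc S res \<longrightarrow>
        (\<exists>(G :: 'a set \<Rightarrow> ('a \<Rightarrow> 'a set \<Rightarrow> 'v) set) resG \<phi>.
           sheaf_hom X sc S res (\<lambda>c f x U. sc c (f x U)) G resG \<phi> \<and>
           stalk_injective X S resG res \<phi> \<and> c_soft X G resG))
   \<and> (\<forall>(sc1 :: 'k \<Rightarrow> 'u::ab_group_add \<Rightarrow> 'u) S1 r1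
        (sc2 :: 'k \<Rightarrow> 'w::ab_group_add \<Rightarrow> 'w) S2 r2
        (sc3 :: 'k \<Rightarrow> 'z::ab_group_add \<Rightarrow> 'z) S3 r3 \<phi> \<psi>.
        short_exact X sc1 S1 r1 sc2 S2 r2 sc3 S3 r3 \<phi> \<psi> \<and> c_soft X S1 r1 \<and> c_soft X S2 r2
          \<longrightarrow> c_soft X S3 r3)
   \<and> (\<forall>(sc1 :: 'k \<Rightarrow> 'u \<Rightarrow> 'u) S1 r1 (sc2 :: 'k \<Rightarrow> 'w \<Rightarrow> 'w) S2 r2
        (sc3 :: 'k \<Rightarrow> 'z \<Rightarrow> 'z) S3 r3 \<phi> \<psi>.
        short_exact X sc1 S1 r1 sc2 S2 r2 sc3 S3 r3 \<phi> \<psi> \<and> c_soft X S1 r1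
          \<longrightarrow> global_sections_exact X S1 S2 S3 \<phi> \<psi>)"
proof (intro conjI allI impI)
  fix sc :: "'k::field \<Rightarrow> 'v::ab_group_add \<Rightarrow> 'v" and S res
  assume "is_sheaf X sc S res"
  then show "\<exists>(G :: 'a set \<Rightarrow> ('a \<Rightarrow> 'a set \<Rightarrow> 'v) set) resG \<phi>.
           sheaf_hom X sc S res (\<lambda>c f x U. sc c (f x U)) G resG \<phi> \<and>
           stalk_injective X S resG res \<phi> \<and> c_soft X G resG"
    by (rule part1[OF lwqc])
next
  fix sc1 :: "'k \<Rightarrow> 'u::ab_group_add \<Rightarrow> 'u" and S1 r1
    and sc2 :: "'k \<Rightarrow> 'w::ab_group_add \<Rightarrow> 'w" and S2 r2
    and sc3 :: "'k \<Rightarrow> 'z::ab_group_add \<Rightarrow> 'z" and S3 r3 \<phi> \<psi>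
  assume h: "short_exact X sc1 S1 r1 sc2 S2 r2 sc3 S3 r3 \<phi> \<psi> \<and> c_soft X S1 r1 \<and> c_soft X S2 r2"
  interpret sex X sc1 S1 r1 sc2 S2 r2 sc3 S3 r3 \<phi> \<psi> using sex_intro[OF lwqc] h by blast
  show "c_soft X S3 r3" using part2 h by blast
next
  fix sc1 :: "'k \<Rightarrow> 'u::ab_group_add \<Rightarrow> 'u" and S1 r1
    and sc2 :: "'k \<Rightarrow> 'w::ab_group_add \<Rightarrow> 'w" and S2 r2
    and sc3 :: "'k \<Rightarrow> 'z::ab_group_add \<Rightarrow> 'z" and S3 r3 \<phi> \<psi>
  assume h: "short_exact X sc1 S1 r1 sc2 S2 r2 sc3 S3 r3 \<phi> \<psi> \<and> c_soft X S1 r1"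
  interpret sex X sc1 S1 r1 sc2 S2 r2 sc3 S3 r3 \<phi> \<psi> using sex_intro[OF lwqc] h by blast
  show "global_sections_exact X S1 S2 S3 \<phi> \<psi>" using part3 h cover by blast
qed


end
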